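(* Let $G$ be a graph and $W$ an object of $\mathrm{Sh}(G)$ whose letters, read cyclically, are $X_1,\dots,X_n$, and let $k$ be the number of cyclic rotations of the list $(X_1,\dots,X_n)$ that return the same list (so $k\mid n$). Then the underlying cyclic permutation induces an equivalence between the connected component of $\mathrm{Sh}(G)$ containing $W$ and the one-object category $\mathcal B C_k$ of the cyclic group of order $k$. In particular, if the list is aperiodic the component is thin.
   Context: $\mathrm{Sh}(G)$ is the shadow category of the free shadowed bicategory on a directed graph $G$: objects are $\langle\!\langle w\rangle\!\rangle$ for $w$ an endomorphism 1-cell of the free bicategory $\mathcal F(G)$ (a parenthesized composable word in edges of $G$ and formal units $I$); morphisms are generated by associators and unitors applied to any subword of $w$ and rotators $\theta:\langle\!\langle A\odot B\rangle\!\rangle\cong\langle\!\langle B\odot A\rangle\!\rangle$ applied to the outermost product, modulo the bicategory axioms, the shadow axioms ($\theta\theta=1$, $\ell\theta=r$ on $\langle\!\langle X\odot I\rangle\!\rangle$, and the associativity hexagon relating $\theta$ and $\alpha$) and naturality of $\theta$. The underlying cyclic permutation of a morphism is the induced bijection of edge occurrences. A list is aperiodic if no nontrivial rotation fixes it. *)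

theory Defs
  imports Main
begin

text \<open>A directed graph is given by source and target maps s t :: 'e => 'v on its
edge type.  1-cells of the free bicategory: parenthesized words in edges and
formal units.  Convention: if A : a -> b and B : b -> c then Cmp A B : a -> c.\<close>

datatype ('v, 'e) cell = E 'e | I 'v | Cmp "('v, 'e) cell" "('v, 'e) cell"

fun src1 :: "('e \<Rightarrow> 'v) \<Rightarrow> ('e \<Rightarrow> 'v) \<Rightarrow> ('v, 'e) cell \<Rightarrow> 'v" where
  "src1 s t (E e) = s e"
| "src1 s t (I v) = v"
| "src1 s t (Cmp A B) = src1 s t A"

fun tgt1 :: "('e \<Rightarrow> 'v) \<Rightarrow> ('e \<Rightarrow> 'v) \<Rightarrow> ('v, 'e) cell \<Rightarrow> 'v" where
  "tgt1 s t (E e) = t e"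
| "tgt1 s t (I v) = v"
| "tgt1 s t (Cmp A B) = tgt1 s t B"

fun wf1 :: "('e \<Rightarrow> 'v) \<Rightarrow> ('e \<Rightarrow> 'v) \<Rightarrow> ('v, 'e) cell \<Rightarrow> bool" where
  "wf1 s t (E e) = True"
| "wf1 s t (I v) = True"
| "wf1 s t (Cmp A B) = (wf1 s t A \<and> wf1 s t B \<and> tgt1 s t A = src1 s t B)"

definition endo :: "('e \<Rightarrow> 'v) \<Rightarrow> ('e \<Rightarrow> 'v) \<Rightarrow> ('v, 'e) cell \<Rightarrow> bool" where
  "endo s t A \<longleftrightarrow> wf1 s t A \<and> src1 s t A = tgt1 s t A"

fun letters :: "('v, 'e) cell \<Rightarrow> 'e list" where
  "letters (E e) = [e]"
| "letters (I v) = []"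
| "letters (Cmp A B) = letters A @ letters B"

text \<open>TV f g is vertical composition "first f, then g"; TH is horizontal composition.\<close>
datatype ('v, 'e) tc =
    TId "('v, 'e) cell"
  | TA "('v, 'e) cell" "('v, 'e) cell" "('v, 'e) cell"
  | TAi "('v, 'e) cell" "('v, 'e) cell" "('v, 'e) cell"
  | TL "('v, 'e) cell" | TLi "('v, 'e) cell"
  | TR "('v, 'e) cell" | TRi "('v, 'e) cell"
  | TH "('v, 'e) tc" "('v, 'e) tc"
  | TV "('v, 'e) tc" "('v, 'e) tc"

inductive tc_typ :: "('e \<Rightarrow> 'v) \<Rightarrow> ('e \<Rightarrow> 'v) \<Rightarrow> ('v, 'e) tc \<Rightarrow> ('v, 'e) cell \<Rightarrow> ('v, 'e) cell \<Rightarrow> bool"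
  for s t where
  "wf1 s t A \<Longrightarrow> tc_typ s t (TId A) A A"
| "wf1 s t (Cmp (Cmp A B) C) \<Longrightarrow> tc_typ s t (TA A B C) (Cmp (Cmp A B) C) (Cmp A (Cmp B C))"
| "wf1 s t (Cmp (Cmp A B) C) \<Longrightarrow> tc_typ s t (TAi A B C) (Cmp A (Cmp B C)) (Cmp (Cmp A B) C)"
| "wf1 s t A \<Longrightarrow> tc_typ s t (TL A) (Cmp (I (src1 s t A)) A) A"
| "wf1 s t A \<Longrightarrow> tc_typ s t (TLi A) A (Cmp (I (src1 s t A)) A)"
| "wf1 s t A \<Longrightarrow> tc_typ s t (TR A) (Cmp A (I (tgt1 s t A))) A"
| "wf1 s t A \<Longrightarrow> tc_typ s t (TRi A) A (Cmp A (I (tgt1 s t A)))"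
| "tc_typ s t f A A' \<Longrightarrow> tc_typ s t g B B' \<Longrightarrow> tgt1 s t A = src1 s t B \<Longrightarrow>
     tc_typ s t (TH f g) (Cmp A B) (Cmp A' B')"
| "tc_typ s t f A B \<Longrightarrow> tc_typ s t g B C \<Longrightarrow> tc_typ s t (TV f g) A C"

inductive eq2 :: "('e \<Rightarrow> 'v) \<Rightarrow> ('e \<Rightarrow> 'v) \<Rightarrow> ('v, 'e) tc \<Rightarrow> ('v, 'e) tc \<Rightarrow> bool"
  for s t where
  refl2: "tc_typ s t f A B \<Longrightarrow> eq2 s t f f"
| sym2: "eq2 s t f g \<Longrightarrow> eq2 s t g f"
| trans2: "eq2 s t f g \<Longrightarrow> eq2 s t g h \<Longrightarrow> eq2 s t f h"
| congH: "eq2 s t f f' \<Longrightarrow> eq2 s t g g' \<Longrightarrow> tc_typ s t (TH f g) X Y \<Longrightarrow> eq2 s t (TH f g) (TH f' g')"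
| congV: "eq2 s t f f' \<Longrightarrow> eq2 s t g g' \<Longrightarrow> tc_typ s t (TV f g) X Y \<Longrightarrow> eq2 s t (TV f g) (TV f' g')"
| idL2: "tc_typ s t f A B \<Longrightarrow> eq2 s t (TV (TId A) f) f"
| idR2: "tc_typ s t f A B \<Longrightarrow> eq2 s t (TV f (TId B)) f"
| assocV: "tc_typ s t f A B \<Longrightarrow> tc_typ s t g B C \<Longrightarrow> tc_typ s t h C D \<Longrightarrow>
     eq2 s t (TV (TV f g) h) (TV f (TV g h))"
| Hid: "wf1 s t (Cmp A B) \<Longrightarrow> eq2 s t (TH (TId A) (TId B)) (TId (Cmp A B))"
| interchange: "tc_typ s t f A B \<Longrightarrow> tc_typ s t g B C \<Longrightarrow> tc_typ s t f' A' B' \<Longrightarrow>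
     tc_typ s t g' B' C' \<Longrightarrow> tgt1 s t A = src1 s t A' \<Longrightarrow>
     eq2 s t (TH (TV f g) (TV f' g')) (TV (TH f f') (TH g g'))"
| invA1: "wf1 s t (Cmp (Cmp A B) C) \<Longrightarrow> eq2 s t (TV (TA A B C) (TAi A B C)) (TId (Cmp (Cmp A B) C))"
| invA2: "wf1 s t (Cmp (Cmp A B) C) \<Longrightarrow> eq2 s t (TV (TAi A B C) (TA A B C)) (TId (Cmp A (Cmp B C)))"
| invL1: "wf1 s t A \<Longrightarrow> eq2 s t (TV (TL A) (TLi A)) (TId (Cmp (I (src1 s t A)) A))"
| invL2: "wf1 s t A \<Longrightarrow> eq2 s t (TV (TLi A) (TL A)) (TId A)"
| invR1: "wf1 s t A \<Longrightarrow> eq2 s t (TV (TR A) (TRi A)) (TId (Cmp A (I (tgt1 s t A))))"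
| invR2: "wf1 s t A \<Longrightarrow> eq2 s t (TV (TRi A) (TR A)) (TId A)"
| natA: "tc_typ s t f A A' \<Longrightarrow> tc_typ s t g B B' \<Longrightarrow> tc_typ s t h C C' \<Longrightarrow>
     wf1 s t (Cmp (Cmp A B) C) \<Longrightarrow>
     eq2 s t (TV (TH (TH f g) h) (TA A' B' C')) (TV (TA A B C) (TH f (TH g h)))"
| natL: "tc_typ s t f A A' \<Longrightarrow>
     eq2 s t (TV (TH (TId (I (src1 s t A))) f) (TL A')) (TV (TL A) f)"
| natR: "tc_typ s t f A A' \<Longrightarrow>
     eq2 s t (TV (TH f (TId (I (tgt1 s t A)))) (TR A')) (TV (TR A) f)"
| pentagon: "wf1 s t (Cmp (Cmp (Cmp A B) C) D) \<Longrightarrow>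
     eq2 s t (TV (TA (Cmp A B) C D) (TA A B (Cmp C D)))
             (TV (TV (TH (TA A B C) (TId D)) (TA A (Cmp B C) D)) (TH (TId A) (TA B C D)))"
| triangle: "wf1 s t (Cmp A B) \<Longrightarrow>
     eq2 s t (TV (TA A (I (tgt1 s t A)) B) (TH (TId A) (TL B))) (TH (TR A) (TId B))"

text \<open>Objects: endomorphism 1-cells W (standing for the shadow of W).
Morphisms: shadows of 2-cells, rotators SRot A B : shadow(A.B) -> shadow(B.A),
and composites (SComp f g = first f, then g).\<close>
datatype ('v, 'e) sm = SSh "('v, 'e) tc" | SRot "('v, 'e) cell" "('v, 'e) cell"
  | SComp "('v, 'e) sm" "('v, 'e) sm"

inductive sm_typ :: "('e \<Rightarrow> 'v) \<Rightarrow> ('e \<Rightarrow> 'v) \<Rightarrow> ('v, 'e) sm \<Rightarrow> ('v, 'e) cell \<Rightarrow> ('v, 'e) cell \<Rightarrow> bool"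
  for s t where
  "tc_typ s t f A B \<Longrightarrow> endo s t A \<Longrightarrow> sm_typ s t (SSh f) A B"
| "endo s t (Cmp A B) \<Longrightarrow> sm_typ s t (SRot A B) (Cmp A B) (Cmp B A)"
| "sm_typ s t f A B \<Longrightarrow> sm_typ s t g B C \<Longrightarrow> sm_typ s t (SComp f g) A C"

inductive eqS :: "('e \<Rightarrow> 'v) \<Rightarrow> ('e \<Rightarrow> 'v) \<Rightarrow> ('v, 'e) sm \<Rightarrow> ('v, 'e) sm \<Rightarrow> bool"
  for s t where
  reflS: "sm_typ s t f A B \<Longrightarrow> eqS s t f f"
| symS: "eqS s t f g \<Longrightarrow> eqS s t g f"
| transS: "eqS s t f g \<Longrightarrow> eqS s t g h \<Longrightarrow> eqS s t f h"
| congC: "eqS s t f f' \<Longrightarrow> eqS s t g g' \<Longrightarrow> sm_typ s t (SComp f g) X Y \<Longrightarrow>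
     eqS s t (SComp f g) (SComp f' g')"
| congSh: "eq2 s t f g \<Longrightarrow> tc_typ s t f A B \<Longrightarrow> endo s t A \<Longrightarrow> eqS s t (SSh f) (SSh g)"
| functSh: "tc_typ s t f A B \<Longrightarrow> tc_typ s t g B C \<Longrightarrow> endo s t A \<Longrightarrow>
     eqS s t (SSh (TV f g)) (SComp (SSh f) (SSh g))"
| idLS: "sm_typ s t f A B \<Longrightarrow> eqS s t (SComp (SSh (TId A)) f) f"
| idRS: "sm_typ s t f A B \<Longrightarrow> eqS s t (SComp f (SSh (TId B))) f"
| assocS: "sm_typ s t f A B \<Longrightarrow> sm_typ s t g B C \<Longrightarrow> sm_typ s t h C D \<Longrightarrow>
     eqS s t (SComp (SComp f g) h) (SComp f (SComp g h))"
| rotrot: "endo s t (Cmp A B) \<Longrightarrow> eqS s t (SComp (SRot A B) (SRot B A)) (SSh (TId (Cmp A B)))"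
| natRot: "tc_typ s t f A A' \<Longrightarrow> tc_typ s t g B B' \<Longrightarrow> endo s t (Cmp A B) \<Longrightarrow>
     eqS s t (SComp (SSh (TH f g)) (SRot A' B')) (SComp (SRot A B) (SSh (TH g f)))"
| unitRot: "endo s t X \<Longrightarrow>
     eqS s t (SComp (SRot X (I (src1 s t X))) (SSh (TL X))) (SSh (TR X))"
| hexagon: "endo s t (Cmp (Cmp M N) P) \<Longrightarrow>
     eqS s t (SComp (SComp (SRot (Cmp M N) P) (SSh (TAi P M N))) (SRot (Cmp P M) N))
             (SComp (SComp (SSh (TA M N P)) (SRot M (Cmp N P))) (SSh (TA N P M)))"

definition sh_comp :: "('e \<Rightarrow> 'v) \<Rightarrow> ('e \<Rightarrow> 'v) \<Rightarrow> ('v, 'e) cell \<Rightarrow> ('v, 'e) cell \<Rightarrow> bool" where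
  "sh_comp s t W V \<longleftrightarrow>
     (\<lambda>X Y. (\<exists>f. sm_typ s t f X Y) \<or> (\<exists>f. sm_typ s t f Y X))\<^sup>*\<^sup>* W V"

text \<open>Number of letters moved from the front to the back (unreduced).\<close>
fun rot_amt :: "('v, 'e) sm \<Rightarrow> nat" where
  "rot_amt (SSh f) = 0"
| "rot_amt (SRot A B) = length (letters A)"
| "rot_amt (SComp f g) = rot_amt f + rot_amt g"

definition rot_occ :: "nat \<Rightarrow> nat \<Rightarrow> nat \<Rightarrow> nat" where
  "rot_occ n j = (\<lambda>i. if i < n then (i + j) mod n else i)"

text \<open>The induced bijection of edge occurrences (position i in the source goes to
position occ_perm n f i in the target), n = number of letters.\<close>
definition occ_perm :: "nat \<Rightarrow> ('v, 'e) sm \<Rightarrow> nat \<Rightarrow> nat" where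
  "occ_perm n f = rot_occ n (n - rot_amt f mod n)"

definition list_rots :: "'a list \<Rightarrow> 'a list \<Rightarrow> (nat \<Rightarrow> nat) set" where
  "list_rots L L' = {\<sigma>. (\<exists>j. \<sigma> = rot_occ (length L) j) \<and> length L' = length L \<and>
                        (\<forall>i<length L. L' ! (\<sigma> i) = L ! i)}"

definition aperiodic :: "'a list \<Rightarrow> bool" where
  "aperiodic L \<longleftrightarrow> (\<forall>r. 0 < r \<and> r < length L \<longrightarrow> rotate r L \<noteq> L)"

end

theory Submission
  imports Defs
begin



context fixes s :: "'e \<Rightarrow> 'v" and t :: "'e \<Rightarrow> 'v" begin

fun dom2 :: "('v,'e) tc \<Rightarrow> ('v,'e) cell" and cod2 :: "('v,'e) tc \<Rightarrow> ('v,'e) cell" where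
  "dom2 (TId A) = A"
| "dom2 (TA A B C) = Cmp (Cmp A B) C"
| "dom2 (TAi A B C) = Cmp A (Cmp B C)"
| "dom2 (TL A) = Cmp (I (src1 s t A)) A"
| "dom2 (TLi A) = A"
| "dom2 (TR A) = Cmp A (I (tgt1 s t A))"
| "dom2 (TRi A) = A"
| "dom2 (TH f g) = Cmp (dom2 f) (dom2 g)"
| "dom2 (TV f g) = dom2 f"
| "cod2 (TId A) = A"
| "cod2 (TA A B C) = Cmp A (Cmp B C)"
| "cod2 (TAi A B C) = Cmp (Cmp A B) C"
| "cod2 (TL A) = A"
| "cod2 (TLi A) = Cmp (I (src1 s t A)) A"
| "cod2 (TR A) = A"
| "cod2 (TRi A) = Cmp A (I (tgt1 s t A))"
| "cod2 (TH f g) = Cmp (cod2 f) (cod2 g)"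
| "cod2 (TV f g) = cod2 g"

fun wt :: "('v,'e) tc \<Rightarrow> bool" where
  "wt (TId A) = wf1 s t A"
| "wt (TA A B C) = wf1 s t (Cmp (Cmp A B) C)"
| "wt (TAi A B C) = wf1 s t (Cmp (Cmp A B) C)"
| "wt (TL A) = wf1 s t A"
| "wt (TLi A) = wf1 s t A"
| "wt (TR A) = wf1 s t A"
| "wt (TRi A) = wf1 s t A"
| "wt (TH f g) = (wt f \<and> wt g \<and> tgt1 s t (dom2 f) = src1 s t (dom2 g))"
| "wt (TV f g) = (wt f \<and> wt g \<and> cod2 f = dom2 g)"

lemma wt_props: "wt f \<Longrightarrow> wf1 s t (dom2 f) \<and> wf1 s t (cod2 f) \<and> src1 s t (dom2 f) = src1 s t (cod2 f)
   \<and> tgt1 s t (dom2 f) = tgt1 s t (cod2 f) \<and> letters (dom2 f) = letters (cod2 f)"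
  by (induction f) auto

lemma wt_simps[simp]: "wt f \<Longrightarrow> src1 s t (cod2 f) = src1 s t (dom2 f)"
  "wt f \<Longrightarrow> tgt1 s t (cod2 f) = tgt1 s t (dom2 f)"
  "wt f \<Longrightarrow> letters (cod2 f) = letters (dom2 f)"
  "wt f \<Longrightarrow> wf1 s t (cod2 f)" "wt f \<Longrightarrow> wf1 s t (dom2 f)"
  using wt_props[of f] by auto

lemma tc_typ_iff: "tc_typ s t f A B \<longleftrightarrow> wt f \<and> dom2 f = A \<and> cod2 f = B"
proof
  assume "tc_typ s t f A B" then show "wt f \<and> dom2 f = A \<and> cod2 f = B"
    by induction auto
next
  show "wt f \<and> dom2 f = A \<and> cod2 f = B \<Longrightarrow> tc_typ s t f A B"
  proof (induction f arbitrary: A B)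
  qed (auto intro: tc_typ.intros)
qed


lemma eq2_reg: "eq2 s t f g \<Longrightarrow> wt f \<and> wt g \<and> dom2 f = dom2 g \<and> cod2 f = cod2 g"
  by (induction rule: eq2.induct) (auto simp: tc_typ_iff)

lemma e_refl: "wt f \<Longrightarrow> eq2 s t f f"
  using eq2.refl2 tc_typ_iff by blast

lemma e_sym: "eq2 s t f g \<Longrightarrow> eq2 s t g f" by (rule eq2.sym2)
lemma e_trans[trans]: "eq2 s t f g \<Longrightarrow> eq2 s t g h \<Longrightarrow> eq2 s t f h" by (rule eq2.trans2)

lemma e_V: "eq2 s t f f' \<Longrightarrow> eq2 s t g g' \<Longrightarrow> cod2 f = dom2 g \<Longrightarrow> eq2 s t (TV f g) (TV f' g')"
  apply (rule eq2.congV, assumption+)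
  using eq2_reg[of f f'] eq2_reg[of g g'] by (auto simp: tc_typ_iff)

lemma e_V1: "eq2 s t f f' \<Longrightarrow> wt g \<Longrightarrow> cod2 f = dom2 g \<Longrightarrow> eq2 s t (TV f g) (TV f' g)"
  by (simp add: e_V e_refl)
lemma e_V2: "eq2 s t g g' \<Longrightarrow> wt f \<Longrightarrow> cod2 f = dom2 g \<Longrightarrow> eq2 s t (TV f g) (TV f g')"
  by (simp add: e_V e_refl)

lemma e_H: "eq2 s t f f' \<Longrightarrow> eq2 s t g g' \<Longrightarrow> tgt1 s t (dom2 f) = src1 s t (dom2 g) \<Longrightarrow> eq2 s t (TH f g) (TH f' g')"
  apply (rule eq2.congH, assumption+)
  using eq2_reg[of f f'] eq2_reg[of g g'] by (auto simp: tc_typ_iff)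

lemma e_H1: "eq2 s t f f' \<Longrightarrow> wt g \<Longrightarrow> tgt1 s t (dom2 f) = src1 s t (dom2 g) \<Longrightarrow> eq2 s t (TH f g) (TH f' g)"
  by (simp add: e_H e_refl)
lemma e_H2: "eq2 s t g g' \<Longrightarrow> wt f \<Longrightarrow> tgt1 s t (dom2 f) = src1 s t (dom2 g) \<Longrightarrow> eq2 s t (TH f g) (TH f g')"
  by (simp add: e_H e_refl)

lemma e_assoc: "wt f \<Longrightarrow> wt g \<Longrightarrow> wt h \<Longrightarrow> cod2 f = dom2 g \<Longrightarrow> cod2 g = dom2 h \<Longrightarrow>
   eq2 s t (TV (TV f g) h) (TV f (TV g h))"
  by (rule eq2.assocV) (auto simp: tc_typ_iff)

lemma e_idL: "wt f \<Longrightarrow> A = dom2 f \<Longrightarrow> eq2 s t (TV (TId A) f) f"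
  by (rule eq2.idL2) (auto simp: tc_typ_iff)
lemma e_idR: "wt f \<Longrightarrow> B = cod2 f \<Longrightarrow> eq2 s t (TV f (TId B)) f"
  by (rule eq2.idR2) (auto simp: tc_typ_iff)

lemma e_inter: "wt f \<Longrightarrow> wt g \<Longrightarrow> wt f' \<Longrightarrow> wt g' \<Longrightarrow> cod2 f = dom2 g \<Longrightarrow> cod2 f' = dom2 g' \<Longrightarrow>
   tgt1 s t (dom2 f) = src1 s t (dom2 f') \<Longrightarrow>
   eq2 s t (TH (TV f g) (TV f' g')) (TV (TH f f') (TH g g'))"
  by (rule eq2.interchange) (auto simp: tc_typ_iff)

lemma e_Hid: "wf1 s t (Cmp A B) \<Longrightarrow> eq2 s t (TH (TId A) (TId B)) (TId (Cmp A B))"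
  by (rule eq2.Hid)

fun inv2 :: "('v,'e) tc \<Rightarrow> ('v,'e) tc" where
  "inv2 (TId A) = TId A"
| "inv2 (TA A B C) = TAi A B C"
| "inv2 (TAi A B C) = TA A B C"
| "inv2 (TL A) = TLi A"
| "inv2 (TLi A) = TL A"
| "inv2 (TR A) = TRi A"
| "inv2 (TRi A) = TR A"
| "inv2 (TH f g) = TH (inv2 f) (inv2 g)"
| "inv2 (TV f g) = TV (inv2 g) (inv2 f)"

lemma inv2_typ: "wt f \<Longrightarrow> wt (inv2 f) \<and> dom2 (inv2 f) = cod2 f \<and> cod2 (inv2 f) = dom2 f"
proof (induction f)
  case (TH f g) thus ?case by (simp del: wt_simps) (metis wt_simps(1,2))
qed (auto simp del: wt_simps)

lemma inv2_ok: "wt f \<Longrightarrow> eq2 s t (TV f (inv2 f)) (TId (dom2 f)) \<and> eq2 s t (TV (inv2 f) f) (TId (cod2 f))"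
proof (induction f)
  case (TId A) then show ?case by (auto intro: e_idL)
next
  case (TA A B C)
  then have w: "wt (TA A B C)" .
  show ?case using eq2.invA1[OF w[unfolded wt.simps]] eq2.invA2[OF w[unfolded wt.simps]] by (simp only: inv2.simps dom2.simps cod2.simps conj_commute)
next
  case (TAi A B C)
  then have w: "wt (TAi A B C)" .
  show ?case using eq2.invA1[OF w[unfolded wt.simps]] eq2.invA2[OF w[unfolded wt.simps]] by (simp only: inv2.simps dom2.simps cod2.simps conj_commute)
next
  case (TL A)
  then have w: "wt (TL A)" .
  show ?case using eq2.invL1[OF w[unfolded wt.simps]] eq2.invL2[OF w[unfolded wt.simps]] by (simp only: inv2.simps dom2.simps cod2.simps conj_commute)
next
  case (TLi A)
  then have w: "wt (TLi A)" .
  show ?case using eq2.invL1[OF w[unfolded wt.simps]] eq2.invL2[OF w[unfolded wt.simps]] by (simp only: inv2.simps dom2.simps cod2.simps conj_commute)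
next
  case (TR A)
  then have w: "wt (TR A)" .
  show ?case using eq2.invR1[OF w[unfolded wt.simps]] eq2.invR2[OF w[unfolded wt.simps]] by (simp only: inv2.simps dom2.simps cod2.simps conj_commute)
next
  case (TRi A)
  then have w: "wt (TRi A)" .
  show ?case using eq2.invR1[OF w[unfolded wt.simps]] eq2.invR2[OF w[unfolded wt.simps]] by (simp only: inv2.simps dom2.simps cod2.simps conj_commute)
next
  case (TH f g)
  have f: "wt f" "wt g" "tgt1 s t (dom2 f) = src1 s t (dom2 g)" using TH by auto
  note i = inv2_typ[OF f(1)] inv2_typ[OF f(2)]
  have "eq2 s t (TV (TH f g) (TH (inv2 f) (inv2 g))) (TH (TV f (inv2 f)) (TV g (inv2 g)))"
    by (rule e_sym, rule e_inter) (use f i in auto)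
  also have "eq2 s t \<dots> (TH (TId (dom2 f)) (TId (dom2 g)))"
    by (rule e_H) (use TH f i in auto)
  also have "eq2 s t \<dots> (TId (dom2 (TH f g)))" using f by (auto intro: e_Hid)
  finally have 1: "eq2 s t (TV (TH f g) (inv2 (TH f g))) (TId (dom2 (TH f g)))" by simp
  have "eq2 s t (TV (TH (inv2 f) (inv2 g)) (TH f g)) (TH (TV (inv2 f) f) (TV (inv2 g) g))"
    by (rule e_sym, rule e_inter) (use f i in auto)
  also have "eq2 s t \<dots> (TH (TId (cod2 f)) (TId (cod2 g)))"
    by (rule e_H) (use TH f i in auto)
  also have "eq2 s t \<dots> (TId (cod2 (TH f g)))" using f by (auto intro: e_Hid)
  finally have 2: "eq2 s t (TV (inv2 (TH f g)) (TH f g)) (TId (cod2 (TH f g)))" by simp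
  show ?case using 1 2 by simp
next
  case (TV f g)
  have f: "wt f" "wt g" "cod2 f = dom2 g" using TV by auto
  note i = inv2_typ[OF f(1)] inv2_typ[OF f(2)]
  have "eq2 s t (TV (TV f g) (TV (inv2 g) (inv2 f))) (TV f (TV g (TV (inv2 g) (inv2 f))))"
    by (rule e_assoc) (use f i in auto)
  also have "eq2 s t \<dots> (TV f (TV (TV g (inv2 g)) (inv2 f)))"
    by (rule e_V2, rule e_sym, rule e_assoc) (use f i in auto)
  also have "eq2 s t \<dots> (TV f (TV (TId (dom2 g)) (inv2 f)))"
    by (rule e_V2, rule e_V1) (use TV f i in auto)
  also have "eq2 s t \<dots> (TV f (inv2 f))"
    by (rule e_V2, rule e_idL) (use TV f i in auto)
  also have "eq2 s t \<dots> (TId (dom2 f))" using TV f by auto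
  finally have 1: "eq2 s t (TV (TV f g) (inv2 (TV f g))) (TId (dom2 (TV f g)))" by simp
  have "eq2 s t (TV (TV (inv2 g) (inv2 f)) (TV f g)) (TV (inv2 g) (TV (inv2 f) (TV f g)))"
    by (rule e_assoc) (use f i in auto)
  also have "eq2 s t \<dots> (TV (inv2 g) (TV (TV (inv2 f) f) g))"
    by (rule e_V2, rule e_sym, rule e_assoc) (use f i in auto)
  also have "eq2 s t \<dots> (TV (inv2 g) (TV (TId (cod2 f)) g))"
    by (rule e_V2, rule e_V1) (use TV f i in auto)
  also have "eq2 s t \<dots> (TV (inv2 g) g)"
    by (rule e_V2, rule e_idL) (use TV f i in auto)
  also have "eq2 s t \<dots> (TId (cod2 g))" using TV f by auto
  finally have 2: "eq2 s t (TV (inv2 (TV f g)) (TV f g)) (TId (cod2 (TV f g)))" by simp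
  show ?case using 1 2 by simp
qed

end



context fixes s :: "'e \<Rightarrow> 'v" and t :: "'e \<Rightarrow> 'v" begin

fun vc :: "('v,'e) tc list \<Rightarrow> ('v,'e) tc" where
  "vc [] = TId (I undefined)" | "vc [f] = f" | "vc (f#g#fs) = TV f (vc (g#fs))"

fun chn :: "('v,'e) tc list \<Rightarrow> bool" where
  "chn [] = False" | "chn [f] = wt s t f"
| "chn (f#g#fs) = (wt s t f \<and> cod2 s t f = dom2 s t g \<and> chn (g#fs))"

lemma vc_dom[simp]: "dom2 s t (vc (f#fs)) = dom2 s t f"
  by (induction fs arbitrary: f) auto
lemma vc_dom'[simp]: "fs \<noteq> [] \<Longrightarrow> dom2 s t (vc fs) = dom2 s t (hd fs)"
  by (cases fs) auto
lemma vc_cod[simp]: "fs \<noteq> [] \<Longrightarrow> cod2 s t (vc fs) = cod2 s t (last fs)"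
  by (induction fs rule: vc.induct) auto
lemma chn_wt: "fs \<noteq> [] \<Longrightarrow> wt s t (vc fs) = chn fs"
  by (induction fs rule: vc.induct) auto

lemma chn_app: "xs \<noteq> [] \<Longrightarrow> ys \<noteq> [] \<Longrightarrow>
   chn (xs @ ys) = (chn xs \<and> chn ys \<and> cod2 s t (last xs) = dom2 s t (hd ys))"
proof (induction xs rule: chn.induct)
  case (2 f) then show ?case by (cases ys) auto
qed auto

lemma vc_app: "chn (xs @ ys) \<Longrightarrow> xs \<noteq> [] \<Longrightarrow> ys \<noteq> [] \<Longrightarrow> eq2 s t (vc (xs @ ys)) (TV (vc xs) (vc ys))"
proof (induction xs rule: chn.induct)
  case (2 f) then show ?case
    by (cases ys) (auto intro: e_refl simp: chn_wt)
next
  case (3 f g fs)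
  have c: "chn (g # fs @ ys)" "wt s t f" "cod2 s t f = dom2 s t g" using 3 by auto
  have cc: "chn (g#fs)" "chn ys" "cod2 s t (last (g#fs)) = dom2 s t (hd ys)"
    using c(1) chn_app[of "g#fs" ys] 3 by auto
  have "eq2 s t (vc (f # g # fs @ ys)) (TV f (TV (vc (g#fs)) (vc ys)))"
    using 3 c by (cases "fs @ ys") (auto intro!: e_V2)
  also have "eq2 s t \<dots> (TV (TV f (vc (g#fs))) (vc ys))"
    by (rule e_sym, rule e_assoc) (use c cc 3 in \<open>auto simp: chn_wt\<close>)
  finally show ?case by simp
qed auto

lemma rw: "eq2 s t (vc m) (vc m') \<Longrightarrow> chn (xs @ m @ ys) \<Longrightarrow> m \<noteq> [] \<Longrightarrow> m' \<noteq> [] \<Longrightarrow>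
   eq2 s t (vc (xs @ m @ ys)) (vc (xs @ m' @ ys))"
proof (induction xs)
  case Nil
  have r: "wt s t (vc m')" "dom2 s t (vc m') = dom2 s t (vc m)" "cod2 s t (vc m') = cod2 s t (vc m)"
    using eq2_reg[OF Nil(1)] by auto
  show ?case
  proof (cases "ys = []")
    case True then show ?thesis using Nil by simp
  next
    case False
    have cm: "chn m" "chn ys" "cod2 s t (last m) = dom2 s t (hd ys)" using Nil False chn_app[of m ys] by auto
    have cm': "chn m'" using r Nil chn_wt by auto
    have l: "cod2 s t (last m') = cod2 s t (last m)" using r Nil by simp
    have "eq2 s t (vc (m @ ys)) (TV (vc m) (vc ys))" using vc_app Nil False by auto
    also have "eq2 s t \<dots> (TV (vc m') (vc ys))" by (rule e_V1) (use Nil cm False chn_wt in auto)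
    also have "eq2 s t \<dots> (vc (m' @ ys))" by (rule e_sym, rule vc_app) (use cm cm' l False Nil chn_app in auto)
    finally show ?thesis by simp
  qed
next
  case (Cons x xs)
  have cx: "chn (xs @ m @ ys)" using Cons.prems(2,3) by (cases "xs @ m @ ys") auto
  show ?case
  proof (cases "xs = []")
    case True
    have r: "dom2 s t (vc m') = dom2 s t (vc m)" using eq2_reg[OF Cons(2)] by auto
    obtain a as where m: "m @ ys = a # as" using Cons by (cases m) auto
    obtain b bs where m': "m' @ ys = b # bs" using Cons by (cases m') auto
    have "vc (m @ ys) = vc (a # as)" using m by simp
    have ih: "eq2 s t (vc (m @ ys)) (vc (m' @ ys))" using Cons True cx by simp
    have "dom2 s t (vc (m@ys)) = dom2 s t (vc m)" using Cons(4) by (cases m) auto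
    moreover have "dom2 s t (vc (m'@ys)) = dom2 s t (vc m')" using Cons(5) by (cases m') auto
    ultimately show ?thesis using True m m' ih Cons r eq2_reg[OF ih]
      by (auto intro!: e_V2 simp: chn_wt[symmetric])
  next
    case False
    obtain a as where xs: "xs = a # as" using False by (cases xs) auto
    have ih: "eq2 s t (vc (xs @ m @ ys)) (vc (xs @ m' @ ys))" using Cons xs cx by simp
    show ?thesis using ih Cons xs eq2_reg[OF ih] by (auto intro!: e_V2)
  qed
qed

lemma cancelR: "eq2 s t (TV f h) (TV g h) \<Longrightarrow> eq2 s t f g"
proof -
  assume a: "eq2 s t (TV f h) (TV g h)"
  note r = eq2_reg[OF a]
  note i = inv2_typ[of s t h] inv2_ok[of s t h]
  have "eq2 s t f (TV f (TId (dom2 s t h)))" by (rule e_sym, rule e_idR) (use r in auto)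
  also have "eq2 s t \<dots> (TV f (TV h (inv2 h)))" by (rule e_V2, rule e_sym) (use r i in auto)
  also have "eq2 s t \<dots> (TV (TV f h) (inv2 h))" by (rule e_sym, rule e_assoc) (use r i in auto)
  also have "eq2 s t \<dots> (TV (TV g h) (inv2 h))" by (rule e_V1) (use r i a in auto)
  also have "eq2 s t \<dots> (TV g (TV h (inv2 h)))" by (rule e_assoc) (use r i in auto)
  also have "eq2 s t \<dots> (TV g (TId (dom2 s t h)))" by (rule e_V2) (use r i in auto)
  also have "eq2 s t \<dots> g" by (rule e_idR) (use r in auto)
  finally show ?thesis .
qed

lemma cancelL: "eq2 s t (TV h f) (TV h g) \<Longrightarrow> eq2 s t f g"
proof -
  assume a: "eq2 s t (TV h f) (TV h g)"
  note r = eq2_reg[OF a]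
  note i = inv2_typ[of s t h] inv2_ok[of s t h]
  have "eq2 s t f (TV (TId (cod2 s t h)) f)" by (rule e_sym, rule e_idL) (use r in auto)
  also have "eq2 s t \<dots> (TV (TV (inv2 h) h) f)" by (rule e_V1, rule e_sym) (use r i in auto)
  also have "eq2 s t \<dots> (TV (inv2 h) (TV h f))" by (rule e_assoc) (use r i in auto)
  also have "eq2 s t \<dots> (TV (inv2 h) (TV h g))" by (rule e_V2) (use r i a in auto)
  also have "eq2 s t \<dots> (TV (TV (inv2 h) h) g)" by (rule e_sym, rule e_assoc) (use r i in auto)
  also have "eq2 s t \<dots> (TV (TId (cod2 s t h)) g)" by (rule e_V1) (use r i in auto)
  also have "eq2 s t \<dots> g" by (rule e_idL) (use r in auto)
  finally show ?thesis .
qed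

lemma ax_natR: "wt s t f \<Longrightarrow> eq2 s t (TV (TH f (TId (I (tgt1 s t (dom2 s t f))))) (TR (cod2 s t f))) (TV (TR (dom2 s t f)) f)"
  by (rule eq2.natR) (simp add: tc_typ_iff)
lemma ax_natL: "wt s t f \<Longrightarrow> eq2 s t (TV (TH (TId (I (src1 s t (dom2 s t f)))) f) (TL (cod2 s t f))) (TV (TL (dom2 s t f)) f)"
  by (rule eq2.natL) (simp add: tc_typ_iff)
lemma ax_natA: "wt s t f \<Longrightarrow> wt s t g \<Longrightarrow> wt s t h \<Longrightarrow> tgt1 s t (dom2 s t f) = src1 s t (dom2 s t g) \<Longrightarrow>
   tgt1 s t (dom2 s t g) = src1 s t (dom2 s t h) \<Longrightarrow>
   eq2 s t (TV (TH (TH f g) h) (TA (cod2 s t f) (cod2 s t g) (cod2 s t h)))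
           (TV (TA (dom2 s t f) (dom2 s t g) (dom2 s t h)) (TH f (TH g h)))"
  by (rule eq2.natA) (auto simp add: tc_typ_iff)
lemma ax_tri: "wf1 s t (Cmp A B) \<Longrightarrow>
     eq2 s t (TV (TA A (I (tgt1 s t A)) B) (TH (TId A) (TL B))) (TH (TR A) (TId B))"
  by (rule eq2.triangle)
lemma ax_pent: "wf1 s t (Cmp (Cmp (Cmp A B) C) D) \<Longrightarrow>
     eq2 s t (vc [TA (Cmp A B) C D, TA A B (Cmp C D)])
             (vc [TH (TA A B C) (TId D), TA A (Cmp B C) D, TH (TId A) (TA B C D)])"
proof -
  assume w: "wf1 s t (Cmp (Cmp (Cmp A B) C) D)"
  have "eq2 s t (vc [TA (Cmp A B) C D, TA A B (Cmp C D)])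
             (TV (TV (TH (TA A B C) (TId D)) (TA A (Cmp B C) D)) (TH (TId A) (TA B C D)))"
    using eq2.pentagon[OF w] by simp
  also have "eq2 s t \<dots> (vc [TH (TA A B C) (TId D), TA A (Cmp B C) D, TH (TId A) (TA B C D)])"
    by (simp, rule e_assoc) (use w in auto)
  finally show ?thesis .
qed

lemma cancel_HR: "eq2 s t (TH f (TId (I w))) (TH g (TId (I w))) \<Longrightarrow> w = tgt1 s t (dom2 s t f) \<Longrightarrow> eq2 s t f g"
proof -
  assume a: "eq2 s t (TH f (TId (I w))) (TH g (TId (I w)))" and ww: "w = tgt1 s t (dom2 s t f)"
  note r = eq2_reg[OF a]
  have rr: "wt s t f" "wt s t g" "dom2 s t f = dom2 s t g" "cod2 s t f = cod2 s t g" using r by auto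
  have ww2: "w = tgt1 s t (dom2 s t g)" using ww rr by simp
  have "eq2 s t (TV (TR (dom2 s t f)) f) (TV (TH f (TId (I w))) (TR (cod2 s t f)))"
    using ax_natR[of f, folded ww, OF rr(1)] by (rule e_sym)
  also have "eq2 s t \<dots> (TV (TH g (TId (I w))) (TR (cod2 s t g)))"
    by (rule e_V) (use a rr ww2 in \<open>auto intro: e_refl\<close>)
  also have "eq2 s t \<dots> (TV (TR (dom2 s t g)) g)"
    using ax_natR[of g, folded ww2] rr(2) by simp
  finally show ?thesis using rr by (auto intro: cancelL)
qed

lemma cancel_HL: "eq2 s t (TH (TId (I w)) f) (TH (TId (I w)) g) \<Longrightarrow> w = src1 s t (dom2 s t f) \<Longrightarrow> eq2 s t f g"
proof -
  assume a: "eq2 s t (TH (TId (I w)) f) (TH (TId (I w)) g)" and ww: "w = src1 s t (dom2 s t f)"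
  note r = eq2_reg[OF a]
  have rr: "wt s t f" "wt s t g" "dom2 s t f = dom2 s t g" "cod2 s t f = cod2 s t g" using r by auto
  have ww2: "w = src1 s t (dom2 s t g)" using ww rr by simp
  have "eq2 s t (TV (TL (dom2 s t f)) f) (TV (TH (TId (I w)) f) (TL (cod2 s t f)))"
    using ax_natL[of f, folded ww, OF rr(1)] by (rule e_sym)
  also have "eq2 s t \<dots> (TV (TH (TId (I w)) g) (TL (cod2 s t g)))"
    by (rule e_V) (use a rr ww2 in \<open>auto intro: e_refl\<close>)
  also have "eq2 s t \<dots> (TV (TL (dom2 s t g)) g)"
    using ax_natL[of g, folded ww2] rr(2) by simp
  finally show ?thesis using rr by (auto intro: cancelL)
qed

lemma HV1: "wt s t f \<Longrightarrow> wt s t g \<Longrightarrow> cod2 s t f = dom2 s t g \<Longrightarrow> wf1 s t C \<Longrightarrow> tgt1 s t (dom2 s t f) = src1 s t C \<Longrightarrow>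
  eq2 s t (TH (TV f g) (TId C)) (vc [TH f (TId C), TH g (TId C)])"
proof -
  assume a: "wt s t f" "wt s t g" "cod2 s t f = dom2 s t g" "wf1 s t C" "tgt1 s t (dom2 s t f) = src1 s t C"
  have "eq2 s t (TH (TV f g) (TId C)) (TH (TV f g) (TV (TId C) (TId C)))"
    by (rule e_H2, rule e_sym, rule e_idL) (use a in auto)
  also have "eq2 s t \<dots> (vc [TH f (TId C), TH g (TId C)])"
    by (simp, rule e_inter) (use a in auto)
  finally show ?thesis .
qed

lemma HV2: "wt s t f \<Longrightarrow> wt s t g \<Longrightarrow> cod2 s t f = dom2 s t g \<Longrightarrow> wf1 s t C \<Longrightarrow> tgt1 s t C = src1 s t (dom2 s t f) \<Longrightarrow>
  eq2 s t (TH (TId C) (TV f g)) (vc [TH (TId C) f, TH (TId C) g])"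
proof -
  assume a: "wt s t f" "wt s t g" "cod2 s t f = dom2 s t g" "wf1 s t C" "tgt1 s t C = src1 s t (dom2 s t f)"
  have "eq2 s t (TH (TId C) (TV f g)) (TH (TV (TId C) (TId C)) (TV f g))"
    by (rule e_H1, rule e_sym, rule e_idL) (use a in auto)
  also have "eq2 s t \<dots> (vc [TH (TId C) f, TH (TId C) g])"
    by (simp, rule e_inter) (use a in auto)
  finally show ?thesis .
qed

end



context fixes s :: "'e \<Rightarrow> 'v" and t :: "'e \<Rightarrow> 'v" begin

lemma rw': "eq2 s t (vc m) (vc m') \<Longrightarrow> chn s t (xs @ m @ ys) \<Longrightarrow> m \<noteq> [] \<Longrightarrow> m' \<noteq> [] \<Longrightarrow>
   L = xs @ m @ ys \<Longrightarrow> L' = xs @ m' @ ys \<Longrightarrow> eq2 s t (vc L) (vc L')"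
  using rw by blast

lemma vc_app': "chn s t (xs @ ys) \<Longrightarrow> xs \<noteq> [] \<Longrightarrow> ys \<noteq> [] \<Longrightarrow> eq2 s t (TV (vc xs) (vc ys)) (vc (xs @ ys))"
  by (rule e_sym, rule vc_app)

lemma K2: assumes w: "wf1 s t X" "wf1 s t Y" "tgt1 s t X = src1 s t Y"
  shows "eq2 s t (TV (TA X Y (I (tgt1 s t Y))) (TH (TId X) (TR Y))) (TR (Cmp X Y))"
proof -
  let ?U = "I (tgt1 s t Y)"
  let ?a = "TA X Y ?U"
  have s1: "eq2 s t (vc [TH (TH (TId X) (TR Y)) (TId ?U), ?a]) (vc [TA X (Cmp Y ?U) ?U, TH (TId X) (TH (TR Y) (TId ?U))])"
    using ax_natA[of s t "TId X" "TR Y" "TId ?U"] w by simp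
  have s2: "eq2 s t (vc [TH (TId X) (TH (TR Y) (TId ?U))]) (vc [TH (TId X) (TV (TA Y ?U ?U) (TH (TId Y) (TL ?U)))])"
    by (simp, rule e_H2, rule e_sym, rule ax_tri) (use w in simp_all)
  have s3: "eq2 s t (vc [TH (TId X) (TV (TA Y ?U ?U) (TH (TId Y) (TL ?U)))]) (vc [TH (TId X) (TA Y ?U ?U), TH (TId X) (TH (TId Y) (TL ?U))])"
    using HV2[of s t "TA Y ?U ?U" "TH (TId Y) (TL ?U)" X] w by simp
  have s4: "eq2 s t (vc [TH ?a (TId ?U), TA X (Cmp Y ?U) ?U, TH (TId X) (TA Y ?U ?U)]) (vc [TA (Cmp X Y) ?U ?U, TA X Y (Cmp ?U ?U)])"
    by (rule e_sym, rule ax_pent) (use w in simp)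
  have s5: "eq2 s t (vc [TA X Y (Cmp ?U ?U), TH (TId X) (TH (TId Y) (TL ?U))]) (vc [TH (TH (TId X) (TId Y)) (TL ?U), ?a])"
    using e_sym[OF ax_natA[of s t "TId X" "TId Y" "TL ?U"]] w by simp
  have s6: "eq2 s t (vc [TH (TH (TId X) (TId Y)) (TL ?U)]) (vc [TH (TId (Cmp X Y)) (TL ?U)])"
    by (simp, rule e_H1, rule e_Hid) (use w in simp_all)
  have "eq2 s t (TV (vc [TH ?a (TId ?U), TH (TH (TId X) (TR Y)) (TId ?U)]) ?a)
       (vc [TH ?a (TId ?U), TH (TH (TId X) (TR Y)) (TId ?U), ?a])"
    using vc_app'[of "[TH ?a (TId ?U), TH (TH (TId X) (TR Y)) (TId ?U)]" "[?a]"] w by simp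
  also have "eq2 s t \<dots> (vc [TH ?a (TId ?U), TA X (Cmp Y ?U) ?U, TH (TId X) (TH (TR Y) (TId ?U))])"
    by (rule rw'[OF s1, where xs="[TH ?a (TId ?U)]" and ys="[]"]) (use w in simp_all)
  also have "eq2 s t \<dots> (vc [TH ?a (TId ?U), TA X (Cmp Y ?U) ?U, TH (TId X) (TV (TA Y ?U ?U) (TH (TId Y) (TL ?U)))])"
    by (rule rw'[OF s2, where xs="[TH ?a (TId ?U), TA X (Cmp Y ?U) ?U]" and ys="[]"]) (use w in simp_all)
  also have "eq2 s t \<dots> (vc [TH ?a (TId ?U), TA X (Cmp Y ?U) ?U, TH (TId X) (TA Y ?U ?U), TH (TId X) (TH (TId Y) (TL ?U))])"
    by (rule rw'[OF s3, where xs="[TH ?a (TId ?U), TA X (Cmp Y ?U) ?U]" and ys="[]"]) (use w in simp_all)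
  also have "eq2 s t \<dots> (vc [TA (Cmp X Y) ?U ?U, TA X Y (Cmp ?U ?U), TH (TId X) (TH (TId Y) (TL ?U))])"
    by (rule rw'[OF s4, where xs="[]" and ys="[TH (TId X) (TH (TId Y) (TL ?U))]"]) (use w in simp_all)
  also have "eq2 s t \<dots> (vc [TA (Cmp X Y) ?U ?U, TH (TH (TId X) (TId Y)) (TL ?U), ?a])"
    by (rule rw'[OF s5, where xs="[TA (Cmp X Y) ?U ?U]" and ys="[]"]) (use w in simp_all)
  also have "eq2 s t \<dots> (vc [TA (Cmp X Y) ?U ?U, TH (TId (Cmp X Y)) (TL ?U), ?a])"
    by (rule rw'[OF s6, where xs="[TA (Cmp X Y) ?U ?U]" and ys="[?a]"]) (use w in simp_all)
  also have "eq2 s t \<dots> (TV (vc [TA (Cmp X Y) ?U ?U, TH (TId (Cmp X Y)) (TL ?U)]) ?a)"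
    using vc_app[of s t "[TA (Cmp X Y) ?U ?U, TH (TId (Cmp X Y)) (TL ?U)]" "[?a]"] w by simp
  finally have m: "eq2 s t (vc [TH ?a (TId ?U), TH (TH (TId X) (TR Y)) (TId ?U)]) (vc [TA (Cmp X Y) ?U ?U, TH (TId (Cmp X Y)) (TL ?U)])"
    by (rule cancelR)
  have "eq2 s t (TH (TV ?a (TH (TId X) (TR Y))) (TId ?U)) (vc [TH ?a (TId ?U), TH (TH (TId X) (TR Y)) (TId ?U)])"
    by (rule HV1) (use w in simp_all)
  also note m
  also have "eq2 s t (vc [TA (Cmp X Y) ?U ?U, TH (TId (Cmp X Y)) (TL ?U)]) (TH (TR (Cmp X Y)) (TId ?U))"
    using ax_tri[of s t "Cmp X Y" ?U] w by simp
  finally show ?thesis by (rule cancel_HR) simp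
qed


lemma K1: assumes w: "wf1 s t Y" "wf1 s t Z" "tgt1 s t Y = src1 s t Z"
  shows "eq2 s t (TV (TA (I (src1 s t Y)) Y Z) (TL (Cmp Y Z))) (TH (TL Y) (TId Z))"
proof -
  let ?U = "I (src1 s t Y)"
  let ?a = "TA ?U Y Z"
  let ?h = "[TH (TA ?U ?U Y) (TId Z), TA ?U (Cmp ?U Y) Z]"
  have s1: "eq2 s t (vc [TH (TA ?U ?U Y) (TId Z), TA ?U (Cmp ?U Y) Z, TH (TId ?U) ?a]) (vc [TA (Cmp ?U ?U) Y Z, TA ?U ?U (Cmp Y Z)])"
    by (rule e_sym, rule ax_pent) (use w in simp)
  have s2: "eq2 s t (vc [TA ?U ?U (Cmp Y Z), TH (TId ?U) (TL (Cmp Y Z))]) (vc [TH (TR ?U) (TId (Cmp Y Z))])"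
    using ax_tri[of s t ?U "Cmp Y Z"] w by simp
  have s3: "eq2 s t (vc [TH (TR ?U) (TId (Cmp Y Z))]) (vc [TH (TR ?U) (TH (TId Y) (TId Z))])"
    by (simp, rule e_H2, rule e_sym, rule e_Hid) (use w in simp_all)
  have s4: "eq2 s t (vc [TA (Cmp ?U ?U) Y Z, TH (TR ?U) (TH (TId Y) (TId Z))]) (vc [TH (TH (TR ?U) (TId Y)) (TId Z), ?a])"
    using e_sym[OF ax_natA[of s t "TR ?U" "TId Y" "TId Z"]] w by simp
  have s5: "eq2 s t (vc [TH (TH (TR ?U) (TId Y)) (TId Z)]) (vc [TH (TV (TA ?U ?U Y) (TH (TId ?U) (TL Y))) (TId Z)])"
    by (simp, rule e_H1, rule e_sym) (use ax_tri[of s t ?U Y] w in simp_all)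
  have s6: "eq2 s t (vc [TH (TV (TA ?U ?U Y) (TH (TId ?U) (TL Y))) (TId Z)]) (vc [TH (TA ?U ?U Y) (TId Z), TH (TH (TId ?U) (TL Y)) (TId Z)])"
    using HV1[of s t "TA ?U ?U Y" "TH (TId ?U) (TL Y)" Z] w by simp
  have s7: "eq2 s t (vc [TH (TH (TId ?U) (TL Y)) (TId Z), ?a]) (vc [TA ?U (Cmp ?U Y) Z, TH (TId ?U) (TH (TL Y) (TId Z))])"
    using ax_natA[of s t "TId ?U" "TL Y" "TId Z"] w by simp
  have "eq2 s t (TV (vc ?h) (vc [TH (TId ?U) ?a, TH (TId ?U) (TL (Cmp Y Z))]))
       (vc [TH (TA ?U ?U Y) (TId Z), TA ?U (Cmp ?U Y) Z, TH (TId ?U) ?a, TH (TId ?U) (TL (Cmp Y Z))])"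
    using vc_app'[of ?h "[TH (TId ?U) ?a, TH (TId ?U) (TL (Cmp Y Z))]"] w by simp
  also have "eq2 s t \<dots> (vc [TA (Cmp ?U ?U) Y Z, TA ?U ?U (Cmp Y Z), TH (TId ?U) (TL (Cmp Y Z))])"
    by (rule rw'[OF s1, where xs="[]" and ys="[TH (TId ?U) (TL (Cmp Y Z))]"]) (use w in simp_all)
  also have "eq2 s t \<dots> (vc [TA (Cmp ?U ?U) Y Z, TH (TR ?U) (TId (Cmp Y Z))])"
    by (rule rw'[OF s2, where xs="[TA (Cmp ?U ?U) Y Z]" and ys="[]"]) (use w in simp_all)
  also have "eq2 s t \<dots> (vc [TA (Cmp ?U ?U) Y Z, TH (TR ?U) (TH (TId Y) (TId Z))])"
    by (rule rw'[OF s3, where xs="[TA (Cmp ?U ?U) Y Z]" and ys="[]"]) (use w in simp_all)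
  also have "eq2 s t \<dots> (vc [TH (TH (TR ?U) (TId Y)) (TId Z), ?a])"
    by (rule rw'[OF s4, where xs="[]" and ys="[]"]) (use w in simp_all)
  also have "eq2 s t \<dots> (vc [TH (TV (TA ?U ?U Y) (TH (TId ?U) (TL Y))) (TId Z), ?a])"
    by (rule rw'[OF s5, where xs="[]" and ys="[?a]"]) (use w in simp_all)
  also have "eq2 s t \<dots> (vc [TH (TA ?U ?U Y) (TId Z), TH (TH (TId ?U) (TL Y)) (TId Z), ?a])"
    by (rule rw'[OF s6, where xs="[]" and ys="[?a]"]) (use w in simp_all)
  also have "eq2 s t \<dots> (vc [TH (TA ?U ?U Y) (TId Z), TA ?U (Cmp ?U Y) Z, TH (TId ?U) (TH (TL Y) (TId Z))])"
    by (rule rw'[OF s7, where xs="[TH (TA ?U ?U Y) (TId Z)]" and ys="[]"]) (use w in simp_all)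
  also have "eq2 s t \<dots> (TV (vc ?h) (vc [TH (TId ?U) (TH (TL Y) (TId Z))]))"
    using vc_app[of s t ?h "[TH (TId ?U) (TH (TL Y) (TId Z))]"] w by simp
  finally have m: "eq2 s t (vc [TH (TId ?U) ?a, TH (TId ?U) (TL (Cmp Y Z))]) (TH (TId ?U) (TH (TL Y) (TId Z)))"
    by (auto dest: cancelL)
  have "eq2 s t (TH (TId ?U) (TV ?a (TL (Cmp Y Z)))) (vc [TH (TId ?U) ?a, TH (TId ?U) (TL (Cmp Y Z))])"
    by (rule HV2) (use w in simp_all)
  also note m
  finally show ?thesis by (rule cancel_HL) simp
qed

lemma K3: "eq2 s t (TL (I v)) (TR (I v))"
proof -
  let ?U = "I v"
  have "eq2 s t (TV (TH (TId ?U) (TL ?U)) (TL ?U)) (TV (TL (Cmp ?U ?U)) (TL ?U))"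
    using ax_natL[of s t "TL ?U"] by simp
  then have l1: "eq2 s t (TH (TId ?U) (TL ?U)) (TL (Cmp ?U ?U))" by (rule cancelR)
  have "eq2 s t (TH (TL ?U) (TId ?U)) (TV (TA ?U ?U ?U) (TL (Cmp ?U ?U)))"
    using K1[of ?U ?U] by (simp add: e_sym)
  also have "eq2 s t \<dots> (TV (TA ?U ?U ?U) (TH (TId ?U) (TL ?U)))"
    by (rule e_V2, rule e_sym, rule l1) simp_all
  also have "eq2 s t \<dots> (TH (TR ?U) (TId ?U))"
    using ax_tri[of s t ?U ?U] by simp
  finally show ?thesis by (rule cancel_HR) simp
qed

end



fun nfl :: "'e list \<Rightarrow> 'v \<Rightarrow> ('v,'e) cell" where
  "nfl [] v = I v" | "nfl (x#xs) v = Cmp (E x) (nfl xs v)"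

fun mrg :: "'e list \<Rightarrow> 'v \<Rightarrow> 'e list \<Rightarrow> 'v \<Rightarrow> ('v,'e) tc" where
  "mrg [] v ys w = TL (nfl ys w)"
| "mrg (x#xs) v ys w = TV (TA (E x) (nfl xs v) (nfl ys w)) (TH (TId (E x)) (mrg xs v ys w))"

context fixes s :: "'e \<Rightarrow> 'v" and t :: "'e \<Rightarrow> 'v" begin

lemma nfl_letters[simp]: "letters (nfl xs v) = xs" by (induction xs) auto
lemma nfl_tgt[simp]: "tgt1 s t (nfl xs v) = v" by (induction xs) auto
lemma nfl_src_app[simp]: "src1 s t (nfl (xs @ ys) w) = src1 s t (nfl xs (src1 s t (nfl ys w)))"
  by (induction xs) auto
lemma nfl_wf_app[simp]: "wf1 s t (nfl (xs @ ys) w) = (wf1 s t (nfl xs (src1 s t (nfl ys w))) \<and> wf1 s t (nfl ys w))"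
  by (induction xs) auto

lemma mrg_typ: "wf1 s t (nfl xs v) \<Longrightarrow> wf1 s t (nfl ys w) \<Longrightarrow> v = src1 s t (nfl ys w) \<Longrightarrow>
  wt s t (mrg xs v ys w) \<and> dom2 s t (mrg xs v ys w) = Cmp (nfl xs v) (nfl ys w) \<and> cod2 s t (mrg xs v ys w) = nfl (xs @ ys) w"
  by (induction xs) auto

lemma mrg_wt[simp]: "wf1 s t (nfl xs v) \<Longrightarrow> wf1 s t (nfl ys w) \<Longrightarrow> v = src1 s t (nfl ys w) \<Longrightarrow> wt s t (mrg xs v ys w)"
  using mrg_typ by blast
lemma mrg_dom[simp]: "wf1 s t (nfl xs v) \<Longrightarrow> wf1 s t (nfl ys w) \<Longrightarrow> v = src1 s t (nfl ys w) \<Longrightarrow> dom2 s t (mrg xs v ys w) = Cmp (nfl xs v) (nfl ys w)"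
  using mrg_typ by blast
lemma mrg_cod[simp]: "wf1 s t (nfl xs v) \<Longrightarrow> wf1 s t (nfl ys w) \<Longrightarrow> v = src1 s t (nfl ys w) \<Longrightarrow> cod2 s t (mrg xs v ys w) = nfl (xs @ ys) w"
  using mrg_typ by blast

lemma L2: "wf1 s t (nfl xs w) \<Longrightarrow> eq2 s t (mrg xs w [] w) (TR (nfl xs w))"
proof (induction xs)
  case Nil then show ?case using K3[of s t w] by simp
next
  case (Cons x xs)
  have w: "wf1 s t (nfl xs w)" "t x = src1 s t (nfl xs w)" using Cons by auto
  have "eq2 s t (mrg (x#xs) w [] w) (TV (TA (E x) (nfl xs w) (I w)) (TH (TId (E x)) (TR (nfl xs w))))"
    apply simp apply (rule e_V2, rule e_H2) using Cons w mrg_typ[of xs w "[]" w] by auto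
  also have "eq2 s t \<dots> (TR (nfl (x#xs) w))"
    using K2[of s t "E x" "nfl xs w"] w by simp
  finally show ?case .
qed


lemma ax_natA': "wt s t f \<Longrightarrow> wt s t g \<Longrightarrow> wt s t h \<Longrightarrow> tgt1 s t (dom2 s t f) = src1 s t (dom2 s t g) \<Longrightarrow>
   tgt1 s t (dom2 s t g) = src1 s t (dom2 s t h) \<Longrightarrow> dom2 s t f = A \<Longrightarrow> dom2 s t g = B \<Longrightarrow> dom2 s t h = C \<Longrightarrow>
   cod2 s t f = A' \<Longrightarrow> cod2 s t g = B' \<Longrightarrow> cod2 s t h = C' \<Longrightarrow>
   eq2 s t (vc [TH (TH f g) h, TA A' B' C']) (vc [TA A B C, TH f (TH g h)])"
  using ax_natA[of s t f g h] by simp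

lemma HV1v: "wt s t f \<Longrightarrow> wt s t g \<Longrightarrow> cod2 s t f = dom2 s t g \<Longrightarrow> wf1 s t C \<Longrightarrow> tgt1 s t (dom2 s t f) = src1 s t C \<Longrightarrow>
  eq2 s t (vc [TH (TV f g) (TId C)]) (vc [TH f (TId C), TH g (TId C)])"
  using HV1[of s t f g C] by (simp only: vc.simps)
lemma HV2v: "wt s t f \<Longrightarrow> wt s t g \<Longrightarrow> cod2 s t f = dom2 s t g \<Longrightarrow> wf1 s t C \<Longrightarrow> tgt1 s t C = src1 s t (dom2 s t f) \<Longrightarrow>
  eq2 s t (vc [TH (TId C) (TV f g)]) (vc [TH (TId C) f, TH (TId C) g])"
  using HV2[of s t f g C] by (simp only: vc.simps)

lemma L1:
  assumes wz: "wf1 s t (nfl zs w)" and hv: "v = src1 s t (nfl zs w)" and wy: "wf1 s t (nfl ys v)"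
    and hu: "u = src1 s t (nfl ys v)" and wx: "wf1 s t (nfl xs u)"
  shows "eq2 s t (vc [TA (nfl xs u) (nfl ys v) (nfl zs w), TH (TId (nfl xs u)) (mrg ys v zs w), mrg xs u (ys @ zs) w])
                 (vc [TH (mrg xs u ys v) (TId (nfl zs w)), mrg (xs @ ys) v zs w])"
  using wx
proof (induction xs)
  case Nil
  let ?Y = "nfl ys v" and ?Z = "nfl zs w" and ?U = "I u"
  let ?m = "mrg ys v zs w"
  have b1: "eq2 s t (vc [TH (TId ?U) ?m, TL (nfl (ys @ zs) w)]) (vc [TL (Cmp ?Y ?Z), ?m])"
    using ax_natL[of s t ?m] wz hv wy hu by simp
  have b2: "eq2 s t (vc [TA ?U ?Y ?Z, TL (Cmp ?Y ?Z)]) (vc [TH (TL ?Y) (TId ?Z)])"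
    using K1[of s t ?Y ?Z] wz hv wy hu by simp
  have "eq2 s t (vc [TA ?U ?Y ?Z, TH (TId ?U) ?m, TL (nfl (ys @ zs) w)]) (vc [TA ?U ?Y ?Z, TL (Cmp ?Y ?Z), ?m])"
    by (rule rw'[OF b1, where xs="[TA ?U ?Y ?Z]" and ys="[]"]) (use wz hv wy hu in simp_all)
  also have "eq2 s t \<dots> (vc [TH (TL ?Y) (TId ?Z), ?m])"
    by (rule rw'[OF b2, where xs="[]" and ys="[?m]"]) (use wz hv wy hu in simp_all)
  finally show ?case by simp
next
  case (Cons x xs)
  let ?X = "nfl xs u" and ?Y = "nfl ys v" and ?Z = "nfl zs w" and ?M = "E x"
  let ?m = "mrg ys v zs w" and ?m1 = "mrg xs u (ys @ zs) w" and ?mXY = "mrg xs u ys v"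
  let ?m2 = "mrg (xs @ ys) v zs w" and ?YZ = "nfl (ys @ zs) w"
  have wx: "wf1 s t ?X" "t x = src1 s t ?X" using Cons by auto
  note ih = Cons.IH[OF wx(1)]
  note ws = wz hv wy hu wx
  have r0: "eq2 s t (vc [mrg (x#xs) u (ys @ zs) w]) (vc [TA ?M ?X ?YZ, TH (TId ?M) ?m1])"
    by (simp, rule e_refl) (use ws in simp)
  have r1: "eq2 s t (vc [TH (TId (Cmp ?M ?X)) ?m]) (vc [TH (TH (TId ?M) (TId ?X)) ?m])"
    by (simp, rule e_H1, rule e_sym, rule e_Hid) (use ws in simp_all)
  have r2: "eq2 s t (vc [TH (TH (TId ?M) (TId ?X)) ?m, TA ?M ?X ?YZ]) (vc [TA ?M ?X (Cmp ?Y ?Z), TH (TId ?M) (TH (TId ?X) ?m)])"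
    by (rule ax_natA') (use ws in simp_all)
  have r3: "eq2 s t (vc [TA (Cmp ?M ?X) ?Y ?Z, TA ?M ?X (Cmp ?Y ?Z)])
     (vc [TH (TA ?M ?X ?Y) (TId ?Z), TA ?M (Cmp ?X ?Y) ?Z, TH (TId ?M) (TA ?X ?Y ?Z)])"
    by (rule ax_pent) (use ws in simp)
  have r4: "eq2 s t (vc [TH (TId ?M) (TH (TId ?X) ?m), TH (TId ?M) ?m1]) (vc [TH (TId ?M) (TV (TH (TId ?X) ?m) ?m1)])"
    by (rule e_sym, rule HV2v) (use ws in simp_all)
  have r5: "eq2 s t (vc [TH (TId ?M) (TA ?X ?Y ?Z), TH (TId ?M) (TV (TH (TId ?X) ?m) ?m1)])
                    (vc [TH (TId ?M) (TV (TA ?X ?Y ?Z) (TV (TH (TId ?X) ?m) ?m1))])"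
    by (rule e_sym, rule HV2v) (use ws in simp_all)
  have ih': "eq2 s t (TV (TA ?X ?Y ?Z) (TV (TH (TId ?X) ?m) ?m1)) (TV (TH ?mXY (TId ?Z)) ?m2)"
    using ih by (simp only: vc.simps)
  have r6: "eq2 s t (vc [TH (TId ?M) (TV (TA ?X ?Y ?Z) (TV (TH (TId ?X) ?m) ?m1))]) (vc [TH (TId ?M) (TV (TH ?mXY (TId ?Z)) ?m2)])"
    by (simp only: vc.simps(2), rule e_H2[OF ih']) (use ws in simp_all)
  have r7: "eq2 s t (vc [TH (TId ?M) (TV (TH ?mXY (TId ?Z)) ?m2)]) (vc [TH (TId ?M) (TH ?mXY (TId ?Z)), TH (TId ?M) ?m2])"
    by (rule HV2v) (use ws in simp_all)
  have r8: "eq2 s t (vc [TA ?M (Cmp ?X ?Y) ?Z, TH (TId ?M) (TH ?mXY (TId ?Z))]) (vc [TH (TH (TId ?M) ?mXY) (TId ?Z), TA ?M (nfl (xs @ ys) v) ?Z])"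
    by (rule e_sym, rule ax_natA') (use ws in simp_all)
  have r9: "eq2 s t (vc [TH (TA ?M ?X ?Y) (TId ?Z), TH (TH (TId ?M) ?mXY) (TId ?Z)]) (vc [TH (TV (TA ?M ?X ?Y) (TH (TId ?M) ?mXY)) (TId ?Z)])"
    by (rule e_sym, rule HV1v) (use ws in simp_all)
  have r10: "eq2 s t (vc [TA ?M (nfl (xs @ ys) v) ?Z, TH (TId ?M) ?m2]) (vc [mrg ((x#xs) @ ys) v zs w])"
    by (simp, rule e_refl) (use ws in simp)
  have "eq2 s t (vc [TA (Cmp ?M ?X) ?Y ?Z, TH (TId (Cmp ?M ?X)) ?m, mrg (x#xs) u (ys @ zs) w])
      (vc [TA (Cmp ?M ?X) ?Y ?Z, TH (TId (Cmp ?M ?X)) ?m, TA ?M ?X ?YZ, TH (TId ?M) ?m1])"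
    by (rule rw'[OF r0, where xs="[TA (Cmp ?M ?X) ?Y ?Z, TH (TId (Cmp ?M ?X)) ?m]" and ys="[]"]) (use ws in simp_all)
  also have "eq2 s t \<dots> (vc [TA (Cmp ?M ?X) ?Y ?Z, TH (TH (TId ?M) (TId ?X)) ?m, TA ?M ?X ?YZ, TH (TId ?M) ?m1])"
    by (rule rw'[OF r1, where xs="[TA (Cmp ?M ?X) ?Y ?Z]" and ys="[TA ?M ?X ?YZ, TH (TId ?M) ?m1]"]) (use ws in simp_all)
  also have "eq2 s t \<dots> (vc [TA (Cmp ?M ?X) ?Y ?Z, TA ?M ?X (Cmp ?Y ?Z), TH (TId ?M) (TH (TId ?X) ?m), TH (TId ?M) ?m1])"
    by (rule rw'[OF r2, where xs="[TA (Cmp ?M ?X) ?Y ?Z]" and ys="[TH (TId ?M) ?m1]"]) (use ws in simp_all)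
  also have "eq2 s t \<dots> (vc [TH (TA ?M ?X ?Y) (TId ?Z), TA ?M (Cmp ?X ?Y) ?Z, TH (TId ?M) (TA ?X ?Y ?Z), TH (TId ?M) (TH (TId ?X) ?m), TH (TId ?M) ?m1])"
    by (rule rw'[OF r3, where xs="[]" and ys="[TH (TId ?M) (TH (TId ?X) ?m), TH (TId ?M) ?m1]"]) (use ws in simp_all)
  also have "eq2 s t \<dots> (vc [TH (TA ?M ?X ?Y) (TId ?Z), TA ?M (Cmp ?X ?Y) ?Z, TH (TId ?M) (TA ?X ?Y ?Z), TH (TId ?M) (TV (TH (TId ?X) ?m) ?m1)])"
    by (rule rw'[OF r4, where xs="[TH (TA ?M ?X ?Y) (TId ?Z), TA ?M (Cmp ?X ?Y) ?Z, TH (TId ?M) (TA ?X ?Y ?Z)]" and ys="[]"]) (use ws in simp_all)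
  also have "eq2 s t \<dots> (vc [TH (TA ?M ?X ?Y) (TId ?Z), TA ?M (Cmp ?X ?Y) ?Z, TH (TId ?M) (TV (TA ?X ?Y ?Z) (TV (TH (TId ?X) ?m) ?m1))])"
    by (rule rw'[OF r5, where xs="[TH (TA ?M ?X ?Y) (TId ?Z), TA ?M (Cmp ?X ?Y) ?Z]" and ys="[]"]) (use ws in simp_all)
  also have "eq2 s t \<dots> (vc [TH (TA ?M ?X ?Y) (TId ?Z), TA ?M (Cmp ?X ?Y) ?Z, TH (TId ?M) (TV (TH ?mXY (TId ?Z)) ?m2)])"
    by (rule rw'[OF r6, where xs="[TH (TA ?M ?X ?Y) (TId ?Z), TA ?M (Cmp ?X ?Y) ?Z]" and ys="[]"]) (use ws in simp_all)
  also have "eq2 s t \<dots> (vc [TH (TA ?M ?X ?Y) (TId ?Z), TA ?M (Cmp ?X ?Y) ?Z, TH (TId ?M) (TH ?mXY (TId ?Z)), TH (TId ?M) ?m2])"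
    by (rule rw'[OF r7, where xs="[TH (TA ?M ?X ?Y) (TId ?Z), TA ?M (Cmp ?X ?Y) ?Z]" and ys="[]"]) (use ws in simp_all)
  also have "eq2 s t \<dots> (vc [TH (TA ?M ?X ?Y) (TId ?Z), TH (TH (TId ?M) ?mXY) (TId ?Z), TA ?M (nfl (xs @ ys) v) ?Z, TH (TId ?M) ?m2])"
    by (rule rw'[OF r8, where xs="[TH (TA ?M ?X ?Y) (TId ?Z)]" and ys="[TH (TId ?M) ?m2]"]) (use ws in simp_all)
  also have "eq2 s t \<dots> (vc [TH (TV (TA ?M ?X ?Y) (TH (TId ?M) ?mXY)) (TId ?Z), TA ?M (nfl (xs @ ys) v) ?Z, TH (TId ?M) ?m2])"
    by (rule rw'[OF r9, where xs="[]" and ys="[TA ?M (nfl (xs @ ys) v) ?Z, TH (TId ?M) ?m2]"]) (use ws in simp_all)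
  also have "eq2 s t \<dots> (vc [TH (TV (TA ?M ?X ?Y) (TH (TId ?M) ?mXY)) (TId ?Z), mrg ((x#xs) @ ys) v zs w])"
    by (rule rw'[OF r10, where xs="[TH (TV (TA ?M ?X ?Y) (TH (TId ?M) ?mXY)) (TId ?Z)]" and ys="[]"]) (use ws in simp_all)
  finally show ?case by simp
qed

end



context fixes s :: "'e \<Rightarrow> 'v" and t :: "'e \<Rightarrow> 'v" begin

fun can :: "('v,'e) cell \<Rightarrow> ('v,'e) tc" where
  "can (E e) = TRi (E e)"
| "can (I v) = TId (I v)"
| "can (Cmp A B) = TV (TH (can A) (can B)) (mrg (letters A) (tgt1 s t A) (letters B) (tgt1 s t B))"

lemma can_typ: "wf1 s t A \<Longrightarrow> wt s t (can A) \<and> dom2 s t (can A) = A \<and> cod2 s t (can A) = nfl (letters A) (tgt1 s t A)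
   \<and> wf1 s t (nfl (letters A) (tgt1 s t A)) \<and> src1 s t (nfl (letters A) (tgt1 s t A)) = src1 s t A"
  by (induction A) auto

lemma can_simps[simp]: "wf1 s t A \<Longrightarrow> wt s t (can A)" "wf1 s t A \<Longrightarrow> dom2 s t (can A) = A"
  "wf1 s t A \<Longrightarrow> cod2 s t (can A) = nfl (letters A) (tgt1 s t A)"
  "wf1 s t A \<Longrightarrow> wf1 s t (nfl (letters A) (tgt1 s t A))"
  "wf1 s t A \<Longrightarrow> src1 s t (nfl (letters A) (tgt1 s t A)) = src1 s t A"
  using can_typ by blast+

lemma HV3: "wt s t f \<Longrightarrow> wt s t g \<Longrightarrow> wt s t h \<Longrightarrow> cod2 s t g = dom2 s t h \<Longrightarrow> tgt1 s t (dom2 s t f) = src1 s t (dom2 s t g) \<Longrightarrow>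
   eq2 s t (vc [TH f (TV g h)]) (vc [TH f g, TH (TId (cod2 s t f)) h])"
proof -
  assume a: "wt s t f" "wt s t g" "wt s t h" "cod2 s t g = dom2 s t h" "tgt1 s t (dom2 s t f) = src1 s t (dom2 s t g)"
  have "eq2 s t (TH f (TV g h)) (TH (TV f (TId (cod2 s t f))) (TV g h))"
    by (rule e_H1, rule e_sym, rule e_idR) (use a in simp_all)
  also have "eq2 s t \<dots> (TV (TH f g) (TH (TId (cod2 s t f)) h))"
    by (rule e_inter) (use a in simp_all)
  finally show ?thesis by simp
qed

lemma HV4: "wt s t f \<Longrightarrow> wt s t g \<Longrightarrow> wt s t h \<Longrightarrow> cod2 s t f = dom2 s t g \<Longrightarrow> tgt1 s t (dom2 s t f) = src1 s t (dom2 s t h) \<Longrightarrow>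
   eq2 s t (vc [TH (TV f g) h]) (vc [TH f h, TH g (TId (cod2 s t h))])"
proof -
  assume a: "wt s t f" "wt s t g" "wt s t h" "cod2 s t f = dom2 s t g" "tgt1 s t (dom2 s t f) = src1 s t (dom2 s t h)"
  have "eq2 s t (TH (TV f g) h) (TH (TV f g) (TV h (TId (cod2 s t h))))"
    by (rule e_H2, rule e_sym, rule e_idR) (use a in simp_all)
  also have "eq2 s t \<dots> (TV (TH f h) (TH g (TId (cod2 s t h))))"
    by (rule e_inter) (use a in simp_all)
  finally show ?thesis by simp
qed

lemma coh_TA: assumes w: "wf1 s t A" "wf1 s t B" "wf1 s t C" "src1 s t B = tgt1 s t A" "src1 s t C = tgt1 s t B"
  shows "eq2 s t (TV (TA A B C) (can (Cmp A (Cmp B C)))) (can (Cmp (Cmp A B) C))"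
proof -
  let ?cA = "can A" and ?cB = "can B" and ?cC = "can C"
  let ?nA = "nfl (letters A) (tgt1 s t A)" and ?nB = "nfl (letters B) (tgt1 s t B)" and ?nC = "nfl (letters C) (tgt1 s t C)"
  let ?mBC = "mrg (letters B) (tgt1 s t B) (letters C) (tgt1 s t C)"
  let ?mABC = "mrg (letters A) (tgt1 s t A) (letters B @ letters C) (tgt1 s t C)"
  let ?mAB = "mrg (letters A) (tgt1 s t A) (letters B) (tgt1 s t B)"
  let ?mAB_C = "mrg (letters A @ letters B) (tgt1 s t B) (letters C) (tgt1 s t C)"
  have c1: "eq2 s t (vc [TH ?cA (TV (TH ?cB ?cC) ?mBC)]) (vc [TH ?cA (TH ?cB ?cC), TH (TId ?nA) ?mBC])"
    using HV3[of ?cA "TH ?cB ?cC" ?mBC] w by simp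
  have c2: "eq2 s t (vc [TA A B C, TH ?cA (TH ?cB ?cC)]) (vc [TH (TH ?cA ?cB) ?cC, TA ?nA ?nB ?nC])"
    by (rule e_sym, rule ax_natA') (use w in simp_all)
  have c3: "eq2 s t (vc [TA ?nA ?nB ?nC, TH (TId ?nA) ?mBC, ?mABC]) (vc [TH ?mAB (TId ?nC), ?mAB_C])"
    by (rule L1) (use w in simp_all)
  have c4: "eq2 s t (vc [TH (TH ?cA ?cB) ?cC, TH ?mAB (TId ?nC)]) (vc [TH (TV (TH ?cA ?cB) ?mAB) ?cC])"
    using e_sym[OF HV4[of "TH ?cA ?cB" ?mAB ?cC]] w by simp
  have "eq2 s t (TV (TA A B C) (can (Cmp A (Cmp B C)))) (vc [TA A B C, TH ?cA (TV (TH ?cB ?cC) ?mBC), ?mABC])"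
    by (simp, rule e_refl) (use w in simp)
  also have "eq2 s t \<dots> (vc [TA A B C, TH ?cA (TH ?cB ?cC), TH (TId ?nA) ?mBC, ?mABC])"
    by (rule rw'[OF c1, where xs="[TA A B C]" and ys="[?mABC]"]) (use w in simp_all)
  also have "eq2 s t \<dots> (vc [TH (TH ?cA ?cB) ?cC, TA ?nA ?nB ?nC, TH (TId ?nA) ?mBC, ?mABC])"
    by (rule rw'[OF c2, where xs="[]" and ys="[TH (TId ?nA) ?mBC, ?mABC]"]) (use w in simp_all)
  also have "eq2 s t \<dots> (vc [TH (TH ?cA ?cB) ?cC, TH ?mAB (TId ?nC), ?mAB_C])"
    by (rule rw'[OF c3, where xs="[TH (TH ?cA ?cB) ?cC]" and ys="[]"]) (use w in simp_all)
  also have "eq2 s t \<dots> (vc [TH (TV (TH ?cA ?cB) ?mAB) ?cC, ?mAB_C])"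
    by (rule rw'[OF c4, where xs="[]" and ys="[?mAB_C]"]) (use w in simp_all)
  finally show ?thesis by simp
qed


lemma coh_main: "wt s t f \<Longrightarrow> eq2 s t (TV f (can (cod2 s t f))) (can (dom2 s t f))"
proof (induction f)
  case (TId A) then show ?case by (auto intro: e_idL)
next
  case (TA A B C) then show ?case using coh_TA[of A B C] by simp
next
  case (TAi A B C)
  have w: "wf1 s t A" "wf1 s t B" "wf1 s t C" "src1 s t B = tgt1 s t A" "src1 s t C = tgt1 s t B" using TAi by auto
  have "eq2 s t (TV (TAi A B C) (can (Cmp (Cmp A B) C))) (TV (TAi A B C) (TV (TA A B C) (can (Cmp A (Cmp B C)))))"
    by (rule e_V2, rule e_sym, rule coh_TA) (use w in simp_all)
  also have "eq2 s t \<dots> (TV (TV (TAi A B C) (TA A B C)) (can (Cmp A (Cmp B C))))"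
    by (rule e_sym, rule e_assoc) (use w in simp_all)
  also have "eq2 s t \<dots> (TV (TId (Cmp A (Cmp B C))) (can (Cmp A (Cmp B C))))"
    by (rule e_V1, rule eq2.invA2) (use w in simp_all)
  also have "eq2 s t \<dots> (can (Cmp A (Cmp B C)))"
    by (rule e_idL) (use w in simp_all)
  finally show ?case by simp
next
  case (TL A)
  have w: "wf1 s t A" using TL by simp
  show ?case using e_sym[OF ax_natL[of s t "can A"]] w by simp
next
  case (TLi A)
  have w: "wf1 s t A" using TLi by simp
  have "eq2 s t (TV (TLi A) (can (Cmp (I (src1 s t A)) A))) (TV (TLi A) (TV (TL A) (can A)))"
    using e_V2[OF ax_natL[of s t "can A"], of "TLi A"] w by simp
  also have "eq2 s t \<dots> (TV (TV (TLi A) (TL A)) (can A))"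
    by (rule e_sym, rule e_assoc) (use w in simp_all)
  also have "eq2 s t \<dots> (TV (TId A) (can A))"
    by (rule e_V1, rule eq2.invL2) (use w in simp_all)
  also have "eq2 s t \<dots> (can A)"
    by (rule e_idL) (use w in simp_all)
  finally show ?case by simp
next
  case (TR A)
  have w: "wf1 s t A" using TR by simp
  have l2: "eq2 s t (mrg (letters A) (tgt1 s t A) [] (tgt1 s t A)) (TR (nfl (letters A) (tgt1 s t A)))"
    by (rule L2) (use w in simp)
  have "eq2 s t (TV (TR A) (can A)) (TV (TH (can A) (TId (I (tgt1 s t A)))) (TR (nfl (letters A) (tgt1 s t A))))"
    using e_sym[OF ax_natR[of s t "can A"]] w by simp
  also have "eq2 s t \<dots> (TV (TH (can A) (TId (I (tgt1 s t A)))) (mrg (letters A) (tgt1 s t A) [] (tgt1 s t A)))"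
    by (rule e_V2, rule e_sym, rule l2) (use w in simp_all)
  finally show ?case by simp
next
  case (TRi A)
  have w: "wf1 s t A" using TRi by simp
  have n: "eq2 s t (TV (TH (can A) (TId (I (tgt1 s t A)))) (TR (nfl (letters A) (tgt1 s t A)))) (TV (TR A) (can A))"
    using ax_natR[of s t "can A"] w by simp
  have l2: "eq2 s t (mrg (letters A) (tgt1 s t A) [] (tgt1 s t A)) (TR (nfl (letters A) (tgt1 s t A)))"
    by (rule L2) (use w in simp)
  have "eq2 s t (TV (TRi A) (can (Cmp A (I (tgt1 s t A))))) (TV (TRi A) (TV (TH (can A) (TId (I (tgt1 s t A)))) (TR (nfl (letters A) (tgt1 s t A)))))"
    by (simp, rule e_V2, rule e_V2, rule l2) (use w in simp_all)
  also have "eq2 s t \<dots> (TV (TRi A) (TV (TR A) (can A)))"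
    by (rule e_V2[OF n]) (use w in simp_all)
  also have "eq2 s t \<dots> (TV (TV (TRi A) (TR A)) (can A))"
    by (rule e_sym, rule e_assoc) (use w in simp_all)
  also have "eq2 s t \<dots> (TV (TId A) (can A))"
    by (rule e_V1, rule eq2.invR2) (use w in simp_all)
  also have "eq2 s t \<dots> (can A)"
    by (rule e_idL) (use w in simp_all)
  finally show ?case by simp
next
  case (TH f g)
  have w0: "wt s t f" "wt s t g" "tgt1 s t (dom2 s t f) = src1 s t (dom2 s t g)" using TH by auto
  have w: "wt s t f" "wt s t g" "tgt1 s t (dom2 s t f) = src1 s t (dom2 s t g)"
    "wf1 s t (nfl (letters (dom2 s t f)) (tgt1 s t (dom2 s t f)))"
    "src1 s t (nfl (letters (dom2 s t f)) (tgt1 s t (dom2 s t f))) = src1 s t (dom2 s t f)"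
    "wf1 s t (nfl (letters (dom2 s t g)) (tgt1 s t (dom2 s t g)))"
    "src1 s t (nfl (letters (dom2 s t g)) (tgt1 s t (dom2 s t g))) = src1 s t (dom2 s t g)"
    using w0 can_simps(4,5) wt_simps(5) by blast+
  let ?m = "mrg (letters (dom2 s t f)) (tgt1 s t (dom2 s t f)) (letters (dom2 s t g)) (tgt1 s t (dom2 s t g))"
  have "eq2 s t (TV (TH f g) (can (cod2 s t (TH f g)))) (TV (TH f g) (TV (TH (can (cod2 s t f)) (can (cod2 s t g))) ?m))"
    using w by (simp add: e_refl)
  also have "eq2 s t \<dots> (TV (TV (TH f g) (TH (can (cod2 s t f)) (can (cod2 s t g)))) ?m)"
    by (rule e_sym, rule e_assoc) (use w in simp_all)
  also have "eq2 s t \<dots> (TV (TH (TV f (can (cod2 s t f))) (TV g (can (cod2 s t g)))) ?m)"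
    by (rule e_V1, rule e_sym, rule e_inter) (use w in simp_all)
  also have "eq2 s t \<dots> (TV (TH (can (dom2 s t f)) (can (dom2 s t g))) ?m)"
    by (rule e_V1, rule e_H) (use w TH in simp_all)
  finally show ?case by simp
next
  case (TV f g)
  have w: "wt s t f" "wt s t g" "cod2 s t f = dom2 s t g" using TV by auto
  have "eq2 s t (TV (TV f g) (can (cod2 s t g))) (TV f (TV g (can (cod2 s t g))))"
    by (rule e_assoc) (use w in simp_all)
  also have "eq2 s t \<dots> (TV f (can (dom2 s t g)))"
    by (rule e_V2) (use w TV in simp_all)
  also have "eq2 s t \<dots> (can (dom2 s t f))"
    using TV w by simp
  finally show ?case by simp
qed

theorem coherence2: "wt s t f \<Longrightarrow> wt s t g \<Longrightarrow> dom2 s t f = dom2 s t g \<Longrightarrow> cod2 s t f = cod2 s t g \<Longrightarrow> eq2 s t f g"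
proof -
  have key: "eq2 s t h (TV (can (dom2 s t h)) (inv2 (can (cod2 s t h))))" if h: "wt s t h" for h
  proof -
    let ?c = "can (cod2 s t h)"
    note i = inv2_typ[of s t ?c] inv2_ok[of s t ?c]
    have "eq2 s t h (TV h (TId (cod2 s t h)))" by (rule e_sym, rule e_idR) (use h in simp_all)
    also have "eq2 s t \<dots> (TV h (TV ?c (inv2 ?c)))" by (rule e_V2, rule e_sym) (use h i in simp_all)
    also have "eq2 s t \<dots> (TV (TV h ?c) (inv2 ?c))" by (rule e_sym, rule e_assoc) (use h i in simp_all)
    also have "eq2 s t \<dots> (TV (can (dom2 s t h)) (inv2 ?c))" by (rule e_V1, rule coh_main) (use h i in simp_all)
    finally show ?thesis .
  qed
  assume a: "wt s t f" "wt s t g" "dom2 s t f = dom2 s t g" "cod2 s t f = cod2 s t g"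
  show ?thesis using key[OF a(1)] key[OF a(2)] a by (metis e_sym e_trans)
qed

end



context fixes s :: "'e \<Rightarrow> 'v" and t :: "'e \<Rightarrow> 'v" begin

fun smdom :: "('v,'e) sm \<Rightarrow> ('v,'e) cell" and smcod :: "('v,'e) sm \<Rightarrow> ('v,'e) cell" where
  "smdom (SSh f) = dom2 s t f" | "smdom (SRot A B) = Cmp A B" | "smdom (SComp f g) = smdom f"
| "smcod (SSh f) = cod2 s t f" | "smcod (SRot A B) = Cmp B A" | "smcod (SComp f g) = smcod g"

fun swt :: "('v,'e) sm \<Rightarrow> bool" where
  "swt (SSh f) = (wt s t f \<and> endo s t (dom2 s t f))"
| "swt (SRot A B) = endo s t (Cmp A B)"
| "swt (SComp f g) = (swt f \<and> swt g \<and> smcod f = smdom g)"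

lemma endo_simp: "endo s t A = (wf1 s t A \<and> src1 s t A = tgt1 s t A)" by (simp add: endo_def)

lemma swt_props: "swt f \<Longrightarrow> endo s t (smdom f) \<and> endo s t (smcod f)"
  by (induction f) (auto simp: endo_def)

lemma swt_simps[simp]: "swt f \<Longrightarrow> wf1 s t (smdom f)" "swt f \<Longrightarrow> wf1 s t (smcod f)"
  "swt f \<Longrightarrow> src1 s t (smdom f) = tgt1 s t (smdom f)" "swt f \<Longrightarrow> src1 s t (smcod f) = tgt1 s t (smcod f)"
  using swt_props[of f] by (auto simp: endo_def)

lemma sm_typ_iff: "sm_typ s t f A B \<longleftrightarrow> swt f \<and> smdom f = A \<and> smcod f = B"
proof
  assume "sm_typ s t f A B" then show "swt f \<and> smdom f = A \<and> smcod f = B"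
    by induction (auto simp: tc_typ_iff)
next
  show "swt f \<and> smdom f = A \<and> smcod f = B \<Longrightarrow> sm_typ s t f A B"
  proof (induction f arbitrary: A B)
  qed (auto intro: sm_typ.intros simp: tc_typ_iff)
qed

lemma eqS_reg: "eqS s t f g \<Longrightarrow> swt f \<and> swt g \<and> smdom f = smdom g \<and> smcod f = smcod g"
proof (induction rule: eqS.induct)
  case (congSh f g A B)
  then show ?case using eq2_reg[OF congSh(1)] by (auto simp: tc_typ_iff)
qed (auto simp: sm_typ_iff tc_typ_iff endo_def)

lemma s_refl: "swt f \<Longrightarrow> eqS s t f f" using eqS.reflS sm_typ_iff by blast
lemma s_sym: "eqS s t f g \<Longrightarrow> eqS s t g f" by (rule eqS.symS)
lemma s_trans[trans]: "eqS s t f g \<Longrightarrow> eqS s t g h \<Longrightarrow> eqS s t f h" by (rule eqS.transS)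

lemma s_C: "eqS s t f f' \<Longrightarrow> eqS s t g g' \<Longrightarrow> smcod f = smdom g \<Longrightarrow> eqS s t (SComp f g) (SComp f' g')"
  apply (rule eqS.congC, assumption+)
  using eqS_reg[of f f'] eqS_reg[of g g'] by (auto simp: sm_typ_iff)

lemma s_assoc: "swt f \<Longrightarrow> swt g \<Longrightarrow> swt h \<Longrightarrow> smcod f = smdom g \<Longrightarrow> smcod g = smdom h \<Longrightarrow>
   eqS s t (SComp (SComp f g) h) (SComp f (SComp g h))"
  by (rule eqS.assocS) (auto simp: sm_typ_iff)

lemma s_idL: "swt f \<Longrightarrow> A = smdom f \<Longrightarrow> eqS s t (SComp (SSh (TId A)) f) f"
  by (rule eqS.idLS) (auto simp: sm_typ_iff)
lemma s_idR: "swt f \<Longrightarrow> B = smcod f \<Longrightarrow> eqS s t (SComp f (SSh (TId B))) f"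
  by (rule eqS.idRS) (auto simp: sm_typ_iff)

lemma s_congSh: "eq2 s t f g \<Longrightarrow> endo s t (dom2 s t f) \<Longrightarrow> eqS s t (SSh f) (SSh g)"
  by (rule eqS.congSh[of s t f g "dom2 s t f" "cod2 s t f"]) (auto simp: tc_typ_iff dest: eq2_reg)

lemma s_funct: "wt s t f \<Longrightarrow> wt s t g \<Longrightarrow> cod2 s t f = dom2 s t g \<Longrightarrow> endo s t (dom2 s t f) \<Longrightarrow>
   eqS s t (SSh (TV f g)) (SComp (SSh f) (SSh g))"
  by (rule eqS.functSh) (auto simp: tc_typ_iff)

lemma s_coh: "wt s t f \<Longrightarrow> wt s t g \<Longrightarrow> dom2 s t f = dom2 s t g \<Longrightarrow> cod2 s t f = cod2 s t g \<Longrightarrow>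
   endo s t (dom2 s t f) \<Longrightarrow> eqS s t (SSh f) (SSh g)"
  by (rule s_congSh, rule coherence2) auto

fun sc :: "('v,'e) sm list \<Rightarrow> ('v,'e) sm" where
  "sc [] = SSh (TId (I undefined))" | "sc [f] = f" | "sc (f#g#fs) = SComp f (sc (g#fs))"

fun schn :: "('v,'e) sm list \<Rightarrow> bool" where
  "schn [] = False" | "schn [f] = swt f"
| "schn (f#g#fs) = (swt f \<and> smcod f = smdom g \<and> schn (g#fs))"

lemma sc_dom[simp]: "smdom (sc (f#fs)) = smdom f"
  by (induction fs arbitrary: f) auto
lemma sc_dom'[simp]: "fs \<noteq> [] \<Longrightarrow> smdom (sc fs) = smdom (hd fs)"
  by (cases fs) auto
lemma sc_cod[simp]: "fs \<noteq> [] \<Longrightarrow> smcod (sc fs) = smcod (last fs)"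
  by (induction fs rule: sc.induct) auto
lemma schn_wt: "fs \<noteq> [] \<Longrightarrow> swt (sc fs) = schn fs"
  by (induction fs rule: sc.induct) auto

lemma schn_app: "xs \<noteq> [] \<Longrightarrow> ys \<noteq> [] \<Longrightarrow>
   schn (xs @ ys) = (schn xs \<and> schn ys \<and> smcod (last xs) = smdom (hd ys))"
proof (induction xs rule: schn.induct)
  case (2 f) then show ?case by (cases ys) auto
qed auto

lemma sc_app: "schn (xs @ ys) \<Longrightarrow> xs \<noteq> [] \<Longrightarrow> ys \<noteq> [] \<Longrightarrow> eqS s t (sc (xs @ ys)) (SComp (sc xs) (sc ys))"
proof (induction xs rule: schn.induct)
  case (2 f) then show ?case
    by (cases ys) (auto intro: s_refl simp: schn_wt)
next
  case (3 f g fs)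
  have c: "schn (g # fs @ ys)" "swt f" "smcod f = smdom g" using 3 by auto
  have cc: "schn (g#fs)" "schn ys" "smcod (last (g#fs)) = smdom (hd ys)"
    using c(1) schn_app[of "g#fs" ys] 3 by auto
  have "eqS s t (sc (f # g # fs @ ys)) (SComp f (SComp (sc (g#fs)) (sc ys)))"
    using 3 c by (cases "fs @ ys") (auto intro!: s_C s_refl)
  also have "eqS s t \<dots> (SComp (SComp f (sc (g#fs))) (sc ys))"
    by (rule s_sym, rule s_assoc) (use c cc 3 in \<open>auto simp: schn_wt\<close>)
  finally show ?case by simp
qed auto

lemma s_rw: "eqS s t (sc m) (sc m') \<Longrightarrow> schn (xs @ m @ ys) \<Longrightarrow> m \<noteq> [] \<Longrightarrow> m' \<noteq> [] \<Longrightarrow>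
   eqS s t (sc (xs @ m @ ys)) (sc (xs @ m' @ ys))"
proof (induction xs)
  case Nil
  have r: "swt (sc m')" "smdom (sc m') = smdom (sc m)" "smcod (sc m') = smcod (sc m)"
    using eqS_reg[OF Nil(1)] by auto
  show ?case
  proof (cases "ys = []")
    case True then show ?thesis using Nil by simp
  next
    case False
    have cm: "schn m" "schn ys" "smcod (last m) = smdom (hd ys)" using Nil False schn_app[of m ys] by auto
    have cm': "schn m'" using r Nil schn_wt by auto
    have l: "smcod (last m') = smcod (last m)" using r Nil by simp
    have "eqS s t (sc (m @ ys)) (SComp (sc m) (sc ys))" using sc_app Nil False by auto
    also have "eqS s t \<dots> (SComp (sc m') (sc ys))" by (rule s_C) (use Nil cm False schn_wt in \<open>auto intro: s_refl\<close>)
    also have "eqS s t \<dots> (sc (m' @ ys))" by (rule s_sym, rule sc_app) (use cm cm' l False Nil schn_app in auto)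
    finally show ?thesis by simp
  qed
next
  case (Cons x xs)
  have cx: "schn (xs @ m @ ys)" using Cons.prems(2,3) by (cases "xs @ m @ ys") auto
  show ?case
  proof (cases "xs = []")
    case True
    have r: "smdom (sc m') = smdom (sc m)" using eqS_reg[OF Cons(2)] by auto
    obtain a as where m: "m @ ys = a # as" using Cons by (cases m) auto
    obtain b bs where m': "m' @ ys = b # bs" using Cons by (cases m') auto
    have ih: "eqS s t (sc (m @ ys)) (sc (m' @ ys))" using Cons True cx by simp
    have "smdom (sc (m@ys)) = smdom (sc m)" using Cons(4) by (cases m) auto
    moreover have "smdom (sc (m'@ys)) = smdom (sc m')" using Cons(5) by (cases m') auto
    ultimately show ?thesis using True m m' ih Cons r eqS_reg[OF ih]
      by (auto intro!: s_C s_refl simp: schn_wt[symmetric])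
  next
    case False
    obtain a as where xs: "xs = a # as" using False by (cases xs) auto
    have ih: "eqS s t (sc (xs @ m @ ys)) (sc (xs @ m' @ ys))" using Cons xs cx by simp
    show ?thesis using ih Cons xs eqS_reg[OF ih] by (auto intro!: s_C s_refl)
  qed
qed

lemma s_rw': "eqS s t (sc m) (sc m') \<Longrightarrow> schn (xs @ m @ ys) \<Longrightarrow> m \<noteq> [] \<Longrightarrow> m' \<noteq> [] \<Longrightarrow>
   L = xs @ m @ ys \<Longrightarrow> L' = xs @ m' @ ys \<Longrightarrow> eqS s t (sc L) (sc L')"
  using s_rw by blast

lemma sc_app': "schn (xs @ ys) \<Longrightarrow> xs \<noteq> [] \<Longrightarrow> ys \<noteq> [] \<Longrightarrow> eqS s t (SComp (sc xs) (sc ys)) (sc (xs @ ys))"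
  by (rule s_sym, rule sc_app)

lemma sh_chain: "chn s t fs \<Longrightarrow> endo s t (dom2 s t (hd fs)) \<Longrightarrow> eqS s t (sc (map SSh fs)) (SSh (vc fs))"
proof (induction fs rule: chn.induct)
  case (2 f) then show ?case by (auto intro: s_refl)
next
  case (3 f g fs)
  have w: "wt s t f" "cod2 s t f = dom2 s t g" "chn s t (g#fs)" using 3 by auto
  have e0: "endo s t (cod2 s t f)" using 3(3) w(1) by (simp add: endo_def)
  have e: "endo s t (dom2 s t g)" using e0 w(2) by simp
  have "eqS s t (sc (map SSh (f # g # fs))) (SComp (SSh f) (SSh (vc (g#fs))))"
    using 3 w e by (auto intro!: s_C s_refl)
  also have "eqS s t \<dots> (SSh (vc (f#g#fs)))"
    by (simp, rule s_sym, rule s_funct) (use w 3 chn_wt in auto)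
  finally show ?case .
qed auto

lemma shc: "chn s t fs \<Longrightarrow> chn s t gs \<Longrightarrow> dom2 s t (hd fs) = dom2 s t (hd gs) \<Longrightarrow>
  cod2 s t (last fs) = cod2 s t (last gs) \<Longrightarrow> endo s t (dom2 s t (hd fs)) \<Longrightarrow>
  eqS s t (sc (map SSh fs)) (sc (map SSh gs))"
proof -
  assume a: "chn s t fs" "chn s t gs" "dom2 s t (hd fs) = dom2 s t (hd gs)"
     "cod2 s t (last fs) = cod2 s t (last gs)" "endo s t (dom2 s t (hd fs))"
  have ne: "fs \<noteq> []" "gs \<noteq> []" using a by auto
  have "eqS s t (sc (map SSh fs)) (SSh (vc fs))" using sh_chain a by blast
  also have "eqS s t \<dots> (SSh (vc gs))"
    by (rule s_coh) (use a ne chn_wt in auto)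
  also have "eqS s t \<dots> (sc (map SSh gs))" by (rule s_sym, rule sh_chain) (use a in auto)
  finally show ?thesis .
qed

end



lemma rot_Suc_Cons: "rotate (Suc a) (x#xs) = rotate a (xs @ [x])"
  by (simp add: rotate1_rotate_swap)

context fixes s :: "'e \<Rightarrow> 'v" and t :: "'e \<Rightarrow> 'v" begin

definition nv :: "'e list \<Rightarrow> 'v \<Rightarrow> 'v" where "nv L v = (if L = [] then v else t (last L))"

definition R1 :: "'e \<Rightarrow> 'e list \<Rightarrow> 'v \<Rightarrow> ('v,'e) sm" where
  "R1 x xs v = SComp (SRot (E x) (nfl xs v)) (SSh (can s t (Cmp (nfl xs v) (E x))))"

fun Rpow :: "nat \<Rightarrow> 'e list \<Rightarrow> 'v \<Rightarrow> ('v,'e) sm" where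
  "Rpow 0 L v = SSh (TId (nfl L v))"
| "Rpow (Suc a) [] v = SSh (TId (I v))"
| "Rpow (Suc a) (x#xs) v = SComp (R1 x xs v) (Rpow a (xs @ [x]) (t x))"

lemma nfl_v: "wf1 s t (nfl L v) \<Longrightarrow> nv L v = v"
  unfolding nv_def by (induction L) auto

lemma endo_rot1: "endo s t (nfl (x#xs) v) \<Longrightarrow> endo s t (nfl (xs @ [x]) (t x))"
  by (auto simp: endo_def)

lemma Rpow_typ: "endo s t (nfl L v) \<Longrightarrow> swt s t (Rpow a L v) \<and> smdom s t (Rpow a L v) = nfl L v
   \<and> smcod s t (Rpow a L v) = nfl (rotate a L) (nv (rotate a L) v)"
proof (induction a arbitrary: L v)
  case 0 then show ?case by (simp add: endo_def nfl_v)
next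
  case (Suc a)
  show ?case
  proof (cases L)
    case Nil then show ?thesis by (simp add: endo_def nv_def)
  next
    case (Cons x xs)
    have e: "endo s t (nfl (xs @ [x]) (t x))" using Suc Cons endo_rot1 by blast
    note ih = Suc.IH[OF e]
    have w: "wf1 s t (nfl xs v)" "src1 s t (nfl xs v) = t x" "s x = v" using Suc Cons by (auto simp: endo_def)
    show ?thesis using ih w Cons by (simp del: rotate_Suc add: R1_def endo_def rot_Suc_Cons nv_def)
  qed
qed

lemma Rpow_simps[simp]: "endo s t (nfl L v) \<Longrightarrow> swt s t (Rpow a L v)"
  "endo s t (nfl L v) \<Longrightarrow> smdom s t (Rpow a L v) = nfl L v"
  "endo s t (nfl L v) \<Longrightarrow> smcod s t (Rpow a L v) = nfl (rotate a L) (nv (rotate a L) v)"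
  using Rpow_typ by blast+

lemma ax_natRot: "wt s t f \<Longrightarrow> wt s t g \<Longrightarrow> endo s t (Cmp (dom2 s t f) (dom2 s t g)) \<Longrightarrow>
  A = dom2 s t f \<Longrightarrow> B = dom2 s t g \<Longrightarrow> A' = cod2 s t f \<Longrightarrow> B' = cod2 s t g \<Longrightarrow>
  eqS s t (sc [SSh (TH f g), SRot A' B']) (sc [SRot A B, SSh (TH g f)])"
  using eqS.natRot[of s t f A A' g B B'] by (simp add: tc_typ_iff)

lemma ax_rotrot: "endo s t (Cmp A B) \<Longrightarrow> eqS s t (sc [SRot A B, SRot B A]) (sc [SSh (TId (Cmp A B))])"
  using eqS.rotrot by simp

lemma ax_unitRot: "endo s t X \<Longrightarrow> U = I (src1 s t X) \<Longrightarrow> eqS s t (sc [SRot X U, SSh (TL X)]) (sc [SSh (TR X)])"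
  using eqS.unitRot by simp

lemma ax_hex: "endo s t (Cmp (Cmp M N) P) \<Longrightarrow>
   eqS s t (sc [SRot (Cmp M N) P, SSh (TAi P M N), SRot (Cmp P M) N]) (sc [SSh (TA M N P), SRot M (Cmp N P), SSh (TA N P M)])"
proof -
  assume e: "endo s t (Cmp (Cmp M N) P)"
  have "eqS s t (sc [SRot (Cmp M N) P, SSh (TAi P M N), SRot (Cmp P M) N])
     (SComp (SComp (SRot (Cmp M N) P) (SSh (TAi P M N))) (SRot (Cmp P M) N))"
    by (simp, rule s_sym, rule s_assoc) (use e in \<open>auto simp: endo_def\<close>)
  also have "eqS s t \<dots> (SComp (SComp (SSh (TA M N P)) (SRot M (Cmp N P))) (SSh (TA N P M)))"
    by (rule eqS.hexagon[OF e])
  also have "eqS s t \<dots> (sc [SSh (TA M N P), SRot M (Cmp N P), SSh (TA N P M)])"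
    by (simp, rule s_assoc) (use e in \<open>auto simp: endo_def\<close>)
  finally show ?thesis .
qed

lemma shc': "chn s t fs \<Longrightarrow> chn s t gs \<Longrightarrow> dom2 s t (hd fs) = dom2 s t (hd gs) \<Longrightarrow>
  cod2 s t (last fs) = cod2 s t (last gs) \<Longrightarrow> endo s t (dom2 s t (hd fs)) \<Longrightarrow>
  L = map SSh fs \<Longrightarrow> L' = map SSh gs \<Longrightarrow> eqS s t (sc L) (sc L')"
  using shc by blast

lemma s_idLc: "swt s t f \<Longrightarrow> A = smdom s t f \<Longrightarrow> eqS s t (sc [SSh (TId A), f]) (sc [f])"
  using s_idL[of s t] by simp
lemma s_idRc: "swt s t f \<Longrightarrow> B = smcod s t f \<Longrightarrow> eqS s t (sc [f, SSh (TId B)]) (sc [f])"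
  using s_idR[of s t] by simp

end



context fixes s :: "'e \<Rightarrow> 'v" and t :: "'e \<Rightarrow> 'v" begin

lemma inv2_simps[simp]: "wt s t f \<Longrightarrow> wt s t (inv2 f)" "wt s t f \<Longrightarrow> dom2 s t (inv2 f) = cod2 s t f"
  "wt s t f \<Longrightarrow> cod2 s t (inv2 f) = dom2 s t f"
  using inv2_typ[of s t f] by blast+

lemma rotC:
  assumes "wf1 s t (nfl la u)" "wf1 s t (nfl lb v)" "src1 s t (nfl lb v) = u" "src1 s t (nfl la u) = v"
  shows "eqS s t (sc [SRot (nfl la u) (nfl lb v), SSh (mrg lb v la u)])
                 (sc [SSh (mrg la u lb v), Rpow s t (length la) (la @ lb) v])"
  using assms
proof (induction la arbitrary: lb v)
  case Nil
  have vu: "v = u" using Nil by simp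
  let ?P = "nfl lb u" and ?U = "I u"
  have w: "wf1 s t ?P" "src1 s t ?P = u" using Nil vu by auto
  have b1: "eqS s t (sc [SSh (mrg lb u [] u)]) (sc [SSh (TR ?P)])"
    by (simp, rule s_congSh, rule L2) (use w in \<open>simp_all add: endo_def\<close>)
  have b2: "eqS s t (sc [SSh (TR ?P)]) (sc [SRot ?P ?U, SSh (TL ?P)])"
    by (rule s_sym, rule ax_unitRot) (use w in \<open>simp_all add: endo_def\<close>)
  have b3: "eqS s t (sc [SRot ?U ?P, SRot ?P ?U]) (sc [SSh (TId (Cmp ?U ?P))])"
    by (rule ax_rotrot) (use w in \<open>simp_all add: endo_def\<close>)
  have b4: "eqS s t (sc [SSh (TId (Cmp ?U ?P)), SSh (TL ?P)]) (sc [SSh (TL ?P)])"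
    by (rule s_idLc) (use w in \<open>simp_all add: endo_def\<close>)
  have b5: "eqS s t (sc [SSh (TL ?P)]) (sc [SSh (TL ?P), SSh (TId ?P)])"
    by (rule s_sym, rule s_idRc) (use w in \<open>simp_all add: endo_def\<close>)
  have "eqS s t (sc [SRot ?U ?P, SSh (mrg lb u [] u)]) (sc [SRot ?U ?P, SSh (TR ?P)])"
    by (rule s_rw'[OF b1, where xs="[SRot ?U ?P]" and ys="[]"]) (use w in \<open>simp_all add: endo_def\<close>)
  also have "eqS s t \<dots> (sc [SRot ?U ?P, SRot ?P ?U, SSh (TL ?P)])"
    by (rule s_rw'[OF b2, where xs="[SRot ?U ?P]" and ys="[]"]) (use w in \<open>simp_all add: endo_def\<close>)
  also have "eqS s t \<dots> (sc [SSh (TId (Cmp ?U ?P)), SSh (TL ?P)])"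
    by (rule s_rw'[OF b3, where xs="[]" and ys="[SSh (TL ?P)]"]) (use w in \<open>simp_all add: endo_def\<close>)
  also have "eqS s t \<dots> (sc [SSh (TL ?P)])"
    by (rule s_rw'[OF b4, where xs="[]" and ys="[]"]) (use w in \<open>simp_all add: endo_def\<close>)
  also note b5
  finally show ?case using vu by simp
next
  case (Cons x xs)
  have w1: "wf1 s t (nfl xs u)" and w2: "src1 s t (nfl xs u) = t x" and w3: "s x = v"
    and w4: "wf1 s t (nfl lb v)" and w5: "src1 s t (nfl lb v) = u" using Cons.prems by auto
  note ws = w1 w2 w3 w4 w5
  have ih: "eqS s t (sc [SRot (nfl xs u) (nfl (lb @ [x]) (t x)), SSh (mrg (lb @ [x]) (t x) xs u)])
                 (sc [SSh (mrg xs u (lb @ [x]) (t x)), Rpow s t (length xs) (xs @ lb @ [x]) (t x)])"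
    using Cons.IH[of "lb @ [x]" "t x"] ws by simp
  let ?M = "E x" and ?N = "nfl xs u" and ?P = "nfl lb v" and ?Q = "nfl (xs @ lb) v" and ?B = "nfl (lb @ [x]) (t x)"
  let ?mA = "mrg (x#xs) u lb v" and ?mNP = "mrg xs u lb v" and ?m5 = "mrg lb v (x#xs) u"
  let ?m3 = "mrg xs u (lb @ [x]) (t x)" and ?m4 = "mrg (lb @ [x]) (t x) xs u"
  let ?c1 = "can s t (Cmp ?Q ?M)" and ?k' = "can s t (Cmp ?P ?M)"
  let ?k = "TV ?c1 (inv2 ?m3)"
  let ?Rp = "Rpow s t (length xs) (xs @ lb @ [x]) (t x)"
  have R1: "eqS s t (sc [SSh ?c1]) (sc [SSh ?k, SSh ?m3])"
    by (rule shc'[where fs="[?c1]" and gs="[?k, ?m3]"]) (use ws in \<open>simp_all add: endo_def\<close>)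
  have R2: "eqS s t (sc [SSh ?m3, ?Rp]) (sc [SRot ?N ?B, SSh ?m4])"
    by (rule s_sym[OF ih])
  have R3: "eqS s t (sc [SSh ?mA]) (sc [SSh (TA ?M ?N ?P), SSh (TH (TId ?M) ?mNP)])"
    by (rule shc'[where fs="[?mA]" and gs="[TA ?M ?N ?P, TH (TId ?M) ?mNP]"]) (use ws in \<open>simp_all add: endo_def\<close>)
  have R4: "eqS s t (sc [SSh (TH (TId ?M) ?mNP), SRot ?M ?Q]) (sc [SRot ?M (Cmp ?N ?P), SSh (TH ?mNP (TId ?M))])"
    by (rule ax_natRot) (use ws in \<open>simp_all add: endo_def\<close>)
  have R5: "eqS s t (sc [SSh (TH ?mNP (TId ?M)), SSh ?k]) (sc [SSh (TA ?N ?P ?M), SSh (TH (TId ?N) ?k')])"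
    by (rule shc'[where fs="[TH ?mNP (TId ?M), ?k]" and gs="[TA ?N ?P ?M, TH (TId ?N) ?k']"]) (use ws in \<open>simp_all add: endo_def\<close>)
  have R6: "eqS s t (sc [SSh (TH (TId ?N) ?k'), SRot ?N ?B]) (sc [SRot ?N (Cmp ?P ?M), SSh (TH ?k' (TId ?N))])"
    by (rule ax_natRot) (use ws in \<open>simp_all add: endo_def\<close>)
  have R7: "eqS s t (sc [SSh (TH ?k' (TId ?N)), SSh ?m4]) (sc [SSh (TA ?P ?M ?N), SSh ?m5])"
    by (rule shc'[where fs="[TH ?k' (TId ?N), ?m4]" and gs="[TA ?P ?M ?N, ?m5]"]) (use ws in \<open>simp_all add: endo_def\<close>)
  have R8: "eqS s t (sc [SSh (TA ?M ?N ?P), SRot ?M (Cmp ?N ?P), SSh (TA ?N ?P ?M)])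
                    (sc [SRot (Cmp ?M ?N) ?P, SSh (TAi ?P ?M ?N), SRot (Cmp ?P ?M) ?N])"
    by (rule s_sym, rule ax_hex) (use ws in \<open>simp_all add: endo_def\<close>)
  have R9: "eqS s t (sc [SRot (Cmp ?P ?M) ?N, SRot ?N (Cmp ?P ?M)]) (sc [SSh (TId (Cmp (Cmp ?P ?M) ?N))])"
    by (rule ax_rotrot) (use ws in \<open>simp_all add: endo_def\<close>)
  have R10: "eqS s t (sc [SSh (TAi ?P ?M ?N), SSh (TId (Cmp (Cmp ?P ?M) ?N)), SSh (TA ?P ?M ?N), SSh ?m5]) (sc [SSh ?m5])"
    by (rule shc'[where fs="[TAi ?P ?M ?N, TId (Cmp (Cmp ?P ?M) ?N), TA ?P ?M ?N, ?m5]" and gs="[?m5]"]) (use ws in \<open>simp_all add: endo_def\<close>)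
  have eqR: "Rpow s t (length (x#xs)) ((x#xs) @ lb) v = SComp (SComp (SRot ?M ?Q) (SSh ?c1)) ?Rp"
    by (simp add: R1_def)
  have a1: "eqS s t (SComp (SComp (SRot ?M ?Q) (SSh ?c1)) ?Rp) (SComp (SRot ?M ?Q) (SComp (SSh ?c1) ?Rp))"
    by (rule s_assoc) (use ws in \<open>simp_all add: endo_def\<close>)
  have "eqS s t (sc [SSh ?mA, Rpow s t (length (x#xs)) ((x#xs) @ lb) v]) (sc [SSh ?mA, SRot ?M ?Q, SSh ?c1, ?Rp])"
    by (simp only: eqR sc.simps, rule s_C[OF s_refl a1]) (use ws in \<open>simp_all add: endo_def\<close>)
  also have "eqS s t \<dots> (sc [SSh ?mA, SRot ?M ?Q, SSh ?k, SSh ?m3, ?Rp])"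
    by (rule s_rw'[OF R1, where xs="[SSh ?mA, SRot ?M ?Q]" and ys="[?Rp]"]) (use ws in \<open>simp_all add: endo_def\<close>)
  also have "eqS s t \<dots> (sc [SSh ?mA, SRot ?M ?Q, SSh ?k, SRot ?N ?B, SSh ?m4])"
    by (rule s_rw'[OF R2, where xs="[SSh ?mA, SRot ?M ?Q, SSh ?k]" and ys="[]"]) (use ws in \<open>simp_all add: endo_def\<close>)
  also have "eqS s t \<dots> (sc [SSh (TA ?M ?N ?P), SSh (TH (TId ?M) ?mNP), SRot ?M ?Q, SSh ?k, SRot ?N ?B, SSh ?m4])"
    by (rule s_rw'[OF R3, where xs="[]" and ys="[SRot ?M ?Q, SSh ?k, SRot ?N ?B, SSh ?m4]"]) (use ws in \<open>simp_all add: endo_def\<close>)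
  also have "eqS s t \<dots> (sc [SSh (TA ?M ?N ?P), SRot ?M (Cmp ?N ?P), SSh (TH ?mNP (TId ?M)), SSh ?k, SRot ?N ?B, SSh ?m4])"
    by (rule s_rw'[OF R4, where xs="[SSh (TA ?M ?N ?P)]" and ys="[SSh ?k, SRot ?N ?B, SSh ?m4]"]) (use ws in \<open>simp_all add: endo_def\<close>)
  also have "eqS s t \<dots> (sc [SSh (TA ?M ?N ?P), SRot ?M (Cmp ?N ?P), SSh (TA ?N ?P ?M), SSh (TH (TId ?N) ?k'), SRot ?N ?B, SSh ?m4])"
    by (rule s_rw'[OF R5, where xs="[SSh (TA ?M ?N ?P), SRot ?M (Cmp ?N ?P)]" and ys="[SRot ?N ?B, SSh ?m4]"]) (use ws in \<open>simp_all add: endo_def\<close>)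
  also have "eqS s t \<dots> (sc [SSh (TA ?M ?N ?P), SRot ?M (Cmp ?N ?P), SSh (TA ?N ?P ?M), SRot ?N (Cmp ?P ?M), SSh (TH ?k' (TId ?N)), SSh ?m4])"
    by (rule s_rw'[OF R6, where xs="[SSh (TA ?M ?N ?P), SRot ?M (Cmp ?N ?P), SSh (TA ?N ?P ?M)]" and ys="[SSh ?m4]"]) (use ws in \<open>simp_all add: endo_def\<close>)
  also have "eqS s t \<dots> (sc [SSh (TA ?M ?N ?P), SRot ?M (Cmp ?N ?P), SSh (TA ?N ?P ?M), SRot ?N (Cmp ?P ?M), SSh (TA ?P ?M ?N), SSh ?m5])"
    by (rule s_rw'[OF R7, where xs="[SSh (TA ?M ?N ?P), SRot ?M (Cmp ?N ?P), SSh (TA ?N ?P ?M), SRot ?N (Cmp ?P ?M)]" and ys="[]"]) (use ws in \<open>simp_all add: endo_def\<close>)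
  also have "eqS s t \<dots> (sc [SRot (Cmp ?M ?N) ?P, SSh (TAi ?P ?M ?N), SRot (Cmp ?P ?M) ?N, SRot ?N (Cmp ?P ?M), SSh (TA ?P ?M ?N), SSh ?m5])"
    by (rule s_rw'[OF R8, where xs="[]" and ys="[SRot ?N (Cmp ?P ?M), SSh (TA ?P ?M ?N), SSh ?m5]"]) (use ws in \<open>simp_all add: endo_def\<close>)
  also have "eqS s t \<dots> (sc [SRot (Cmp ?M ?N) ?P, SSh (TAi ?P ?M ?N), SSh (TId (Cmp (Cmp ?P ?M) ?N)), SSh (TA ?P ?M ?N), SSh ?m5])"
    by (rule s_rw'[OF R9, where xs="[SRot (Cmp ?M ?N) ?P, SSh (TAi ?P ?M ?N)]" and ys="[SSh (TA ?P ?M ?N), SSh ?m5]"]) (use ws in \<open>simp_all add: endo_def\<close>)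
  also have "eqS s t \<dots> (sc [SRot (Cmp ?M ?N) ?P, SSh ?m5])"
    by (rule s_rw'[OF R10, where xs="[SRot (Cmp ?M ?N) ?P]" and ys="[]"]) (use ws in \<open>simp_all add: endo_def\<close>)
  finally have X: "eqS s t (sc [SSh ?mA, Rpow s t (length (x#xs)) ((x#xs) @ lb) v]) (sc [SRot (Cmp ?M ?N) ?P, SSh ?m5])" .
  show ?case using s_sym[OF X] by simp
qed

end



context fixes s :: "'e \<Rightarrow> 'v" and t :: "'e \<Rightarrow> 'v" begin

lemma Rpow_nil: "Rpow s t a [] v = SSh (TId (I v))"
  by (cases a) auto

lemma endo_rot: "endo s t (nfl L v) \<Longrightarrow> endo s t (nfl (rotate a L) (nv t (rotate a L) v))"
  using swt_props[of s t "Rpow s t a L v"] Rpow_typ[of s t L v a] by simp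

lemma Rpow_add: "endo s t (nfl L v) \<Longrightarrow>
  eqS s t (Rpow s t (a + b) L v) (SComp (Rpow s t a L v) (Rpow s t b (rotate a L) (nv t (rotate a L) v)))"
proof (induction a arbitrary: L v)
  case 0
  have nv: "nv t L v = v" using 0 nfl_v by (auto simp: endo_def)
  show ?case using 0 nv by (auto intro!: s_sym[OF s_idL])
next
  case (Suc a)
  show ?case
  proof (cases L)
    case Nil then show ?thesis using Suc by (auto simp: Rpow_nil nv_def endo_def intro!: s_sym[OF s_idL])
  next
    case (Cons x xs)
    have e: "endo s t (nfl (xs @ [x]) (t x))" using Suc.prems Cons endo_rot1[of s t x xs v] by simp
    have w: "wf1 s t (nfl xs v)" "src1 s t (nfl xs v) = t x" "s x = v" using Suc Cons by (auto simp: endo_def)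
    have nvv: "nv t (rotate a (xs @ [x])) (t x) = nv t (rotate a (xs @ [x])) v" by (simp add: nv_def)
    have r1: "swt s t (R1 s t x xs v)" "smdom s t (R1 s t x xs v) = nfl (x#xs) v" "smcod s t (R1 s t x xs v) = nfl (xs @ [x]) (t x)"
      using w by (auto simp: R1_def endo_def)
    note ih = Suc.IH[OF e]
    have eqR: "Rpow s t (Suc a + b) L v = SComp (R1 s t x xs v) (Rpow s t (a + b) (xs @ [x]) (t x))" using Cons by simp
    have "eqS s t (Rpow s t (Suc a + b) L v) (SComp (R1 s t x xs v) (SComp (Rpow s t a (xs @ [x]) (t x)) (Rpow s t b (rotate a (xs @ [x])) (nv t (rotate a (xs @ [x])) (t x)))))"
      unfolding eqR by (rule s_C[OF s_refl ih]) (use r1 e endo_rot[OF e, of a] in simp_all)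
    also have "eqS s t \<dots> (SComp (SComp (R1 s t x xs v) (Rpow s t a (xs @ [x]) (t x))) (Rpow s t b (rotate a (xs @ [x])) (nv t (rotate a (xs @ [x])) (t x))))"
      by (rule s_sym, rule s_assoc) (use r1 e endo_rot[OF e, of a] in simp_all)
    finally show ?thesis using Cons nvv by (simp del: rotate_Suc add: rot_Suc_Cons)
  qed
qed

lemma s_cancelSh: "eqS s t (SComp (SSh h) f) (SComp (SSh h) g) \<Longrightarrow> eqS s t f g"
proof -
  assume a: "eqS s t (SComp (SSh h) f) (SComp (SSh h) g)"
  note r = eqS_reg[OF a]
  have h: "wt s t h" "endo s t (dom2 s t h)" "endo s t (cod2 s t h)" using r swt_props[of s t "SSh h"] by auto
  note i = inv2_typ[of s t h] inv2_ok[of s t h]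
  have "eqS s t f (SComp (SSh (TId (cod2 s t h))) f)" by (rule s_sym, rule s_idL) (use r in auto)
  also have "eqS s t \<dots> (SComp (SSh (TV (inv2 h) h)) f)"
    by (rule s_C[OF _ s_refl], rule s_congSh, rule e_sym) (use r h i in auto)
  also have "eqS s t \<dots> (SComp (SComp (SSh (inv2 h)) (SSh h)) f)"
    by (rule s_C[OF _ s_refl], rule s_funct) (use r h i in auto)
  also have "eqS s t \<dots> (SComp (SSh (inv2 h)) (SComp (SSh h) f))"
    by (rule s_assoc) (use r h i in auto)
  also have "eqS s t \<dots> (SComp (SSh (inv2 h)) (SComp (SSh h) g))"
    by (rule s_C[OF s_refl a]) (use r h i in auto)
  also have "eqS s t \<dots> (SComp (SComp (SSh (inv2 h)) (SSh h)) g)"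
    by (rule s_sym, rule s_assoc) (use r h i in auto)
  also have "eqS s t \<dots> (SComp (SSh (TV (inv2 h) h)) g)"
    by (rule s_C[OF _ s_refl], rule s_sym, rule s_funct) (use r h i in auto)
  also have "eqS s t \<dots> (SComp (SSh (TId (cod2 s t h))) g)"
    by (rule s_C[OF _ s_refl], rule s_congSh) (use r h i in auto)
  also have "eqS s t \<dots> g" by (rule s_idL) (use r in auto)
  finally show ?thesis .
qed

lemma Rpow_period: "endo s t (nfl L v) \<Longrightarrow> eqS s t (Rpow s t (length L) L v) (SSh (TId (nfl L v)))"
proof -
  assume e: "endo s t (nfl L v)"
  have w: "wf1 s t (nfl L v)" "src1 s t (nfl L v) = v" using e by (auto simp: endo_def)
  let ?N = "nfl L v"
  have c: "eqS s t (sc [SRot ?N (I v), SSh (TL ?N)]) (sc [SSh (mrg L v [] v), Rpow s t (length L) L v])"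
    using rotC[of s t L v "[]" v] w by simp
  have u: "eqS s t (sc [SRot ?N (I v), SSh (TL ?N)]) (sc [SSh (TR ?N)])"
    by (rule ax_unitRot) (use w e in simp_all)
  have l2: "eqS s t (SSh (mrg L v [] v)) (SSh (TR ?N))"
    by (rule s_congSh, rule L2) (use w in \<open>simp_all add: endo_def\<close>)
  have "eqS s t (SComp (SSh (TR ?N)) (Rpow s t (length L) L v)) (SComp (SSh (mrg L v [] v)) (Rpow s t (length L) L v))"
    by (rule s_C[OF s_sym[OF l2] s_refl]) (use w e in \<open>simp_all add: endo_def\<close>)
  also have "eqS s t \<dots> (SSh (TR ?N))" using s_trans[OF s_sym[OF c] u] by simp
  also have "eqS s t \<dots> (SComp (SSh (TR ?N)) (SSh (TId ?N)))"
    by (rule s_sym, rule s_idR) (use w e in \<open>simp_all add: endo_def\<close>)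
  finally show ?thesis by (rule s_cancelSh)
qed

lemma Rpow_mult: "endo s t (nfl L v) \<Longrightarrow> eqS s t (Rpow s t (length L * q) L v) (SSh (TId (nfl L v)))"
proof (induction q)
  case 0 then show ?case by (auto intro: s_refl simp: endo_def)
next
  case (Suc q)
  have nv: "nv t L v = v" using Suc nfl_v by (auto simp: endo_def)
  have "eqS s t (Rpow s t (length L * Suc q) L v) (SComp (Rpow s t (length L) L v) (Rpow s t (length L * q) L v))"
    using Rpow_add[OF Suc.prems, of "length L" "length L * q"] nv by simp
  also have "eqS s t \<dots> (SComp (SSh (TId (nfl L v))) (SSh (TId (nfl L v))))"
    by (rule s_C[OF Rpow_period Suc.IH]) (use Suc.prems in \<open>simp_all add: nv\<close>)
  also have "eqS s t \<dots> (SSh (TId (nfl L v)))"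
    by (rule s_idL) (use Suc.prems in \<open>auto simp: endo_def\<close>)
  finally show ?case .
qed

lemma Rpow_mod: "endo s t (nfl L v) \<Longrightarrow> eqS s t (Rpow s t a L v) (Rpow s t (a mod length L) L v)"
proof (cases "L = []")
  case True then show ?thesis by (simp add: Rpow_nil s_refl endo_def)
next
  case False
  assume e: "endo s t (nfl L v)"
  have nv: "nv t L v = v" using e nfl_v by (auto simp: endo_def)
  let ?n = "length L"
  have a: "a = ?n * (a div ?n) + a mod ?n" by simp
  have "eqS s t (Rpow s t a L v) (Rpow s t (?n * (a div ?n) + a mod ?n) L v)" using a e by (metis s_refl Rpow_simps(1))
  also have "eqS s t \<dots> (SComp (Rpow s t (?n * (a div ?n)) L v) (Rpow s t (a mod ?n) L v))"
    using Rpow_add[OF e, of "?n * (a div ?n)" "a mod ?n"] nv by simp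
  also have "eqS s t \<dots> (SComp (SSh (TId (nfl L v))) (Rpow s t (a mod ?n) L v))"
    by (rule s_C[OF Rpow_mult s_refl]) (use e nv in simp_all)
  also have "eqS s t \<dots> (Rpow s t (a mod ?n) L v)"
    by (rule s_idL) (use e in simp_all)
  finally show ?thesis .
qed

end



context fixes s :: "'e \<Rightarrow> 'v" and t :: "'e \<Rightarrow> 'v" begin

lemma wf_nil: "wf1 s t A \<Longrightarrow> letters A = [] \<Longrightarrow> src1 s t A = tgt1 s t A"
  by (induction A) auto

lemma wf_last: "wf1 s t A \<Longrightarrow> letters A \<noteq> [] \<Longrightarrow> tgt1 s t A = t (last (letters A)) \<and> src1 s t A = s (hd (letters A))"
proof (induction A)
  case (Cmp A B)
  show ?case
  proof (cases "letters A = []")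
    case True
    then have "letters B \<noteq> []" using Cmp by simp
    then show ?thesis using Cmp True wf_nil[of A] by auto
  next
    case False
    show ?thesis
    proof (cases "letters B = []")
      case True then show ?thesis using Cmp False wf_nil[of B] by auto
    next
      case F2: False then show ?thesis using Cmp False by auto
    qed
  qed
qed auto

lemma swt_letters: "swt s t f \<Longrightarrow> letters (smcod s t f) = rotate (rot_amt f) (letters (smdom s t f))"
proof (induction f)
  case (SRot A B) then show ?case by (simp add: rotate_append)
next
  case (SComp f g) then show ?case by (simp add: rotate_rotate add.commute)
qed simp

lemma swt_len: "swt s t f \<Longrightarrow> length (letters (smcod s t f)) = length (letters (smdom s t f))"
  using swt_letters by simp

lemma swt_nil_tgt: "swt s t f \<Longrightarrow> letters (smdom s t f) = [] \<Longrightarrow> tgt1 s t (smcod s t f) = tgt1 s t (smdom s t f)"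
proof (induction f)
  case (SRot A B) then show ?case using wf_nil[of A] wf_nil[of B] by (auto simp: endo_def)
next
  case (SComp f g)
  have "letters (smdom s t g) = []" using SComp swt_letters[of f] by auto
  then show ?case using SComp by auto
qed simp

lemma cod_nv: "swt s t f \<Longrightarrow> tgt1 s t (smcod s t f) = nv t (letters (smcod s t f)) (tgt1 s t (smdom s t f))"
proof (cases "letters (smcod s t f) = []")
  case True
  assume f: "swt s t f"
  have "letters (smdom s t f) = []" using True swt_letters[OF f] by simp
  then show ?thesis using swt_nil_tgt[OF f] True by (simp add: nv_def)
next
  case False
  assume f: "swt s t f"
  show ?thesis using wf_last[of "smcod s t f"] False f by (simp add: nv_def)
qed

lemma nfl_can_endo: "endo s t A \<Longrightarrow> endo s t (nfl (letters A) (tgt1 s t A))"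
  using can_simps[of s t A] by (auto simp: endo_def)

lemma KEY: "swt s t f \<Longrightarrow> eqS s t (SComp f (SSh (can s t (smcod s t f))))
    (SComp (SSh (can s t (smdom s t f))) (Rpow s t (rot_amt f) (letters (smdom s t f)) (tgt1 s t (smdom s t f))))"
proof (induction f)
  case (SSh f)
  have w: "wt s t f" "endo s t (dom2 s t f)" using SSh by auto
  have "eqS s t (SComp (SSh f) (SSh (can s t (cod2 s t f)))) (SSh (TV f (can s t (cod2 s t f))))"
    by (rule s_sym, rule s_funct) (use w in \<open>auto simp: endo_def\<close>)
  also have "eqS s t \<dots> (SSh (can s t (dom2 s t f)))"
    by (rule s_congSh, rule coh_main) (use w in auto)
  also have "eqS s t \<dots> (SComp (SSh (can s t (dom2 s t f))) (SSh (TId (nfl (letters (dom2 s t f)) (tgt1 s t (dom2 s t f))))))"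
    by (rule s_sym, rule s_idR) (use w in \<open>auto simp: endo_def\<close>)
  finally show ?case by simp
next
  case (SRot A B)
  have w: "wf1 s t A" "wf1 s t B" "src1 s t B = tgt1 s t A" "src1 s t A = tgt1 s t B" using SRot by (auto simp: endo_def)
  let ?cA = "can s t A" and ?cB = "can s t B"
  let ?nA = "nfl (letters A) (tgt1 s t A)" and ?nB = "nfl (letters B) (tgt1 s t B)"
  let ?mBA = "mrg (letters B) (tgt1 s t B) (letters A) (tgt1 s t A)"
  let ?mAB = "mrg (letters A) (tgt1 s t A) (letters B) (tgt1 s t B)"
  let ?Rp = "Rpow s t (length (letters A)) (letters A @ letters B) (tgt1 s t B)"
  have k1: "eqS s t (sc [SSh (can s t (Cmp B A))]) (sc [SSh (TH ?cB ?cA), SSh ?mBA])"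
    by (rule shc'[where fs="[can s t (Cmp B A)]" and gs="[TH ?cB ?cA, ?mBA]"]) (use w in \<open>simp_all add: endo_def\<close>)
  have k2: "eqS s t (sc [SRot A B, SSh (TH ?cB ?cA)]) (sc [SSh (TH ?cA ?cB), SRot ?nA ?nB])"
    by (rule s_sym, rule ax_natRot) (use w in \<open>simp_all add: endo_def\<close>)
  have k3: "eqS s t (sc [SRot ?nA ?nB, SSh ?mBA]) (sc [SSh ?mAB, ?Rp])"
    using rotC[of s t "letters A" "tgt1 s t A" "letters B" "tgt1 s t B"] w by simp
  have k4: "eqS s t (sc [SSh (TH ?cA ?cB), SSh ?mAB]) (sc [SSh (can s t (Cmp A B))])"
    by (rule shc'[where fs="[TH ?cA ?cB, ?mAB]" and gs="[can s t (Cmp A B)]"]) (use w in \<open>simp_all add: endo_def\<close>)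
  have "eqS s t (sc [SRot A B, SSh (can s t (Cmp B A))]) (sc [SRot A B, SSh (TH ?cB ?cA), SSh ?mBA])"
    by (rule s_rw'[OF k1, where xs="[SRot A B]" and ys="[]"]) (use w in \<open>simp_all add: endo_def\<close>)
  also have "eqS s t \<dots> (sc [SSh (TH ?cA ?cB), SRot ?nA ?nB, SSh ?mBA])"
    by (rule s_rw'[OF k2, where xs="[]" and ys="[SSh ?mBA]"]) (use w in \<open>simp_all add: endo_def\<close>)
  also have "eqS s t \<dots> (sc [SSh (TH ?cA ?cB), SSh ?mAB, ?Rp])"
    by (rule s_rw'[OF k3, where xs="[SSh (TH ?cA ?cB)]" and ys="[]"]) (use w in \<open>simp_all add: endo_def\<close>)
  also have "eqS s t \<dots> (sc [SSh (can s t (Cmp A B)), ?Rp])"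
    by (rule s_rw'[OF k4, where xs="[]" and ys="[?Rp]"]) (use w in \<open>simp_all add: endo_def\<close>)
  finally show ?case by simp
next
  case (SComp f g)
  have w: "swt s t f" "swt s t g" "smcod s t f = smdom s t g" using SComp by auto
  let ?X = "smdom s t f" and ?Y = "smcod s t f" and ?Z = "smcod s t g"
  let ?a = "rot_amt f" and ?b = "rot_amt g"
  let ?LX = "letters ?X" and ?vX = "tgt1 s t ?X"
  have eX: "endo s t ?X" "endo s t ?Y" "endo s t ?Z" using swt_props[of s t f] swt_props[of s t g] w by auto
  have eN: "endo s t (nfl ?LX ?vX)" using nfl_can_endo[OF eX(1)] .
  have LY: "letters ?Y = rotate ?a ?LX" "tgt1 s t ?Y = nv t (rotate ?a ?LX) ?vX"
    using swt_letters[OF w(1)] cod_nv[OF w(1)] by auto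
  have ty: "swt s t (SSh (can s t A))" "smdom s t (SSh (can s t A)) = A" "smcod s t (SSh (can s t A)) = nfl (letters A) (tgt1 s t A)"
    if "endo s t A" for A using that by (auto simp: endo_def)
  note e2 = endo_rot[OF eN, of ?a]
  have Rp: "eqS s t (SComp (Rpow s t ?a ?LX ?vX) (Rpow s t ?b (letters ?Y) (tgt1 s t ?Y))) (Rpow s t (?a + ?b) ?LX ?vX)"
    using s_sym[OF Rpow_add[OF eN, of ?a ?b]] LY by simp
  have "eqS s t (SComp (SComp f g) (SSh (can s t ?Z))) (SComp f (SComp g (SSh (can s t ?Z))))"
    by (rule s_assoc) (use w ty[OF eX(3)] in auto)
  also have "eqS s t \<dots> (SComp f (SComp (SSh (can s t ?Y)) (Rpow s t ?b (letters ?Y) (tgt1 s t ?Y))))"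
    by (rule s_C[OF s_refl]) (use SComp w in auto)
  also have "eqS s t \<dots> (SComp (SComp f (SSh (can s t ?Y))) (Rpow s t ?b (letters ?Y) (tgt1 s t ?Y)))"
    by (rule s_sym, rule s_assoc) (use w ty[OF eX(2)] nfl_can_endo[OF eX(2)] in auto)
  also have "eqS s t \<dots> (SComp (SComp (SSh (can s t ?X)) (Rpow s t ?a ?LX ?vX)) (Rpow s t ?b (letters ?Y) (tgt1 s t ?Y)))"
    by (rule s_C[OF _ s_refl]) (use SComp w nfl_can_endo[OF eX(2)] in auto)
  also have "eqS s t \<dots> (SComp (SSh (can s t ?X)) (SComp (Rpow s t ?a ?LX ?vX) (Rpow s t ?b (letters ?Y) (tgt1 s t ?Y))))"
    by (rule s_assoc) (use w ty[OF eX(1)] eN LY e2 in auto)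
  also have "eqS s t \<dots> (SComp (SSh (can s t ?X)) (Rpow s t (?a + ?b) ?LX ?vX))"
    by (rule s_C[OF s_refl Rp]) (use w ty[OF eX(1)] eN in auto)
  finally show ?case by simp
qed

end



context fixes s :: "'e \<Rightarrow> 'v" and t :: "'e \<Rightarrow> 'v" begin

lemma FW: "eqS s t f g \<Longrightarrow> rot_amt f mod length (letters (smdom s t f)) = rot_amt g mod length (letters (smdom s t f))"
proof (induction rule: eqS.induct)
  case (symS f g) then show ?case using eqS_reg[OF symS.hyps(1)] symS.IH by metis
next
  case (transS f g h) then show ?case using eqS_reg[OF transS.hyps(1)] transS.IH by metis
next
  case (congC f f' g g' X Y)
  have w: "swt s t f" "swt s t g" "smcod s t f = smdom s t g" using congC.hyps by (simp_all add: sm_typ_iff)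
  have n: "length (letters (smdom s t g)) = length (letters (smdom s t f))" using swt_len[OF w(1)] w(3) by simp
  have ih1: "rot_amt f mod length (letters (smdom s t f)) = rot_amt f' mod length (letters (smdom s t f))" using congC.IH(1) .
  have ih2: "rot_amt g mod length (letters (smdom s t g)) = rot_amt g' mod length (letters (smdom s t g))" using congC.IH(2) .
  show ?case using mod_add_cong[OF ih1 ih2[unfolded n]] by simp
next
  case (natRot f A A' g B B')
  have "letters A' = letters A" using natRot.hyps(1) by (metis tc_typ_iff wt_simps(3))
  then show ?case by simp
next
  case (hexagon M N P)
  have e: "length (letters M) + length (letters N) + (length (letters P) + length (letters M))
     = (length (letters M) + (length (letters N) + length (letters P))) + length (letters M)" by simp
  show ?case apply simp apply (subst e) apply (subst mod_add_self1) ..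
next
  case (reflS f A B) then show ?case by simp
next
  case (congSh f g A B) then show ?case by simp
next
  case (functSh f A B g C) then show ?case by simp
next
  case (idLS f A B) then show ?case by simp
next
  case (idRS f A B) then show ?case by simp
next
  case (assocS f A B g C h D) then show ?case by (simp add: add.assoc)
next
  case (rotrot A B) then show ?case by simp
next
  case (unitRot X) then show ?case by simp
qed

lemma Rpow_eq: "endo s t (nfl L v) \<Longrightarrow> (L = [] \<or> a mod length L = b mod length L) \<Longrightarrow> eqS s t (Rpow s t a L v) (Rpow s t b L v)"
proof -
  assume e: "endo s t (nfl L v)" and c: "L = [] \<or> a mod length L = b mod length L"
  show ?thesis
  proof (cases "L = []")
    case True then show ?thesis using e by (simp add: Rpow_nil s_refl endo_def)
  next
    case False
    then have m: "a mod length L = b mod length L" using c by simp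
    show ?thesis using Rpow_mod[OF e, of a] Rpow_mod[OF e, of b] m by (metis s_sym s_trans)
  qed
qed

lemma decomp: "swt s t h \<Longrightarrow> eqS s t h (SComp (SComp (SSh (can s t (smdom s t h)))
     (Rpow s t (rot_amt h) (letters (smdom s t h)) (tgt1 s t (smdom s t h)))) (SSh (inv2 (can s t (smcod s t h)))))"
proof -
  assume h: "swt s t h"
  let ?X = "smdom s t h" and ?Y = "smcod s t h"
  have eY: "endo s t ?Y" "endo s t ?X" using swt_props[OF h] by auto
  have eN: "endo s t (nfl (letters ?X) (tgt1 s t ?X))" using nfl_can_endo[OF eY(2)] .
  let ?c = "can s t ?Y"
  have wc: "wt s t ?c" "dom2 s t ?c = ?Y" "cod2 s t ?c = nfl (letters ?Y) (tgt1 s t ?Y)" using eY by (auto simp: endo_def)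
  note i = inv2_typ[of s t ?c] inv2_ok[of s t ?c]
  have LY: "letters ?Y = rotate (rot_amt h) (letters ?X)" "tgt1 s t ?Y = nv t (rotate (rot_amt h) (letters ?X)) (tgt1 s t ?X)"
    using swt_letters[OF h] cod_nv[OF h] by auto
  have ci: "eqS s t (SComp (SSh ?c) (SSh (inv2 ?c))) (SSh (TId ?Y))"
  proof -
    have "eqS s t (SComp (SSh ?c) (SSh (inv2 ?c))) (SSh (TV ?c (inv2 ?c)))"
      by (rule s_sym, rule s_funct) (use wc i eY in auto)
    also have "eqS s t \<dots> (SSh (TId ?Y))" by (rule s_congSh) (use wc i eY in auto)
    finally show ?thesis .
  qed
  have "eqS s t h (SComp h (SSh (TId ?Y)))" by (rule s_sym, rule s_idR) (use h in auto)
  also have "eqS s t \<dots> (SComp h (SComp (SSh ?c) (SSh (inv2 ?c))))"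
    by (rule s_C[OF s_refl s_sym[OF ci]]) (use h in auto)
  also have "eqS s t \<dots> (SComp (SComp h (SSh ?c)) (SSh (inv2 ?c)))"
    by (rule s_sym, rule s_assoc) (use h wc i eY in \<open>auto simp: endo_def\<close>)
  also have "eqS s t \<dots> (SComp (SComp (SSh (can s t ?X)) (Rpow s t (rot_amt h) (letters ?X) (tgt1 s t ?X))) (SSh (inv2 ?c)))"
    by (rule s_C[OF KEY[OF h] s_refl]) (use h wc i eY eN LY endo_rot[OF eN, of "rot_amt h"] in \<open>auto simp: endo_def\<close>)
  finally show ?thesis .
qed

lemma FAITH: "swt s t f \<Longrightarrow> swt s t g \<Longrightarrow> smdom s t f = smdom s t g \<Longrightarrow> smcod s t f = smcod s t g \<Longrightarrow>
   (letters (smdom s t f) = [] \<or> rot_amt f mod length (letters (smdom s t f)) = rot_amt g mod length (letters (smdom s t f))) \<Longrightarrow>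
   eqS s t f g"
proof -
  assume f: "swt s t f" and g: "swt s t g" and d: "smdom s t f = smdom s t g" and c: "smcod s t f = smcod s t g"
    and m: "letters (smdom s t f) = [] \<or> rot_amt f mod length (letters (smdom s t f)) = rot_amt g mod length (letters (smdom s t f))"
  let ?X = "smdom s t f" and ?Y = "smcod s t f"
  have eY: "endo s t ?Y" "endo s t ?X" using swt_props[OF f] by auto
  have eN: "endo s t (nfl (letters ?X) (tgt1 s t ?X))" using nfl_can_endo[OF eY(2)] .
  have r: "eqS s t (Rpow s t (rot_amt f) (letters ?X) (tgt1 s t ?X)) (Rpow s t (rot_amt g) (letters ?X) (tgt1 s t ?X))"
    by (rule Rpow_eq[OF eN]) (use m in auto)
  have "eqS s t f (SComp (SComp (SSh (can s t ?X)) (Rpow s t (rot_amt f) (letters ?X) (tgt1 s t ?X))) (SSh (inv2 (can s t ?Y))))"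
    by (rule decomp[OF f])
  also have "eqS s t \<dots> (SComp (SComp (SSh (can s t ?X)) (Rpow s t (rot_amt g) (letters ?X) (tgt1 s t ?X))) (SSh (inv2 (can s t ?Y))))"
  proof -
    have "smcod s t (SComp (SSh (can s t ?X)) (Rpow s t (rot_amt f) (letters ?X) (tgt1 s t ?X))) = smdom s t (SSh (inv2 (can s t ?Y)))"
      using eqS_reg[OF decomp[OF f]] by simp
    then show ?thesis
      by (intro s_C[OF s_C[OF s_refl r] s_refl]) (use eY eN eqS_reg[OF decomp[OF f]] in \<open>auto simp: endo_def\<close>)
  qed
  also have "eqS s t \<dots> g" using s_sym[OF decomp[OF g]] d c by simp
  finally show ?thesis .
qed

end



lemma rot_occ_mod: "rot_occ n x = rot_occ n (x mod n)"
  by (rule ext) (simp add: rot_occ_def mod_add_right_eq)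

lemma rot_occ_comp: "rot_occ n x \<circ> rot_occ n y = rot_occ n (y + x)"
  by (rule ext) (simp add: rot_occ_def mod_add_left_eq add.assoc)

lemma nr_cancel: "0 < n \<Longrightarrow> (n - r mod n + r) mod n = (0::nat)"
proof -
  assume n: "0 < n"
  define q where "q = r div n"
  define m where "m = r mod n"
  have r: "r = n * q + m" unfolding q_def m_def by simp
  have mn: "m < n" unfolding m_def using n by simp
  have "n - r mod n + r = n * Suc q" unfolding m_def[symmetric] using r mn by simp
  then show ?thesis by simp
qed

lemma mc_rcancel: "((x::nat) + a) mod n = (y + a) mod n \<Longrightarrow> x mod n = y mod n"
proof -
  assume h: "(x + a) mod n = (y + a) mod n"
  have "int ((x + a) mod n) = int ((y + a) mod n)" using h by simp
  then have "(int x + int a) mod int n = (int y + int a) mod int n" by (simp add: zmod_int)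
  then have "((int x + int a) - int a) mod int n = ((int y + int a) - int a) mod int n"
    by (rule mod_diff_cong) simp
  then have "int x mod int n = int y mod int n" by simp
  then have "int (x mod n) = int (y mod n)" by (simp add: zmod_int)
  then show ?thesis by simp
qed

lemma mc_lcancel: "((a::nat) + x) mod n = (a + y) mod n \<Longrightarrow> x mod n = y mod n"
  using mc_rcancel[of x a n y] by (simp add: add.commute)

lemma occ_comp: "rot_occ n (n - (a + b) mod n) = rot_occ n (n - b mod n) \<circ> rot_occ n (n - a mod n)"
proof (cases "n = 0")
  case True then show ?thesis by (auto simp: rot_occ_def)
next
  case False
  then have n: "0 < n" by simp
  have c1: "((n - (a + b) mod n) + (a + b)) mod n = 0" using nr_cancel[OF n, of "a+b"] by simp
  have c2: "(((n - a mod n) + (n - b mod n)) + (a + b)) mod n = 0"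
  proof -
    have "((n - a mod n) + (n - b mod n)) + (a + b) = (n - a mod n + a) + (n - b mod n + b)" by simp
    moreover have "((n - a mod n + a) + (n - b mod n + b)) mod n = (0 + 0) mod n"
      using nr_cancel[OF n, of a] nr_cancel[OF n, of b] by (intro mod_add_cong) simp_all
    ultimately show ?thesis by (simp only: add_0 mod_0)
  qed
  have "(n - (a + b) mod n) mod n = ((n - a mod n) + (n - b mod n)) mod n"
    by (rule mc_rcancel[of _ "a + b"]) (use c1 c2 in simp)
  then show ?thesis using rot_occ_comp rot_occ_mod by metis
qed

lemma occ_eq_iff: "0 < n \<Longrightarrow> rot_occ n (n - a mod n) = rot_occ n (n - b mod n) \<longleftrightarrow> a mod n = b mod n"
proof
  assume n: "0 < n" and e: "rot_occ n (n - a mod n) = rot_occ n (n - b mod n)"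
  have "rot_occ n (n - a mod n) 0 = rot_occ n (n - b mod n) 0" using e by simp
  then have pq: "(n - a mod n) mod n = (n - b mod n) mod n" using n by (simp add: rot_occ_def)
  have "(n - a mod n + a) mod n = (n - b mod n + a) mod n" using pq by (intro mod_add_cong) simp_all
  then have "(n - b mod n + a) mod n = (n - b mod n + b) mod n" using nr_cancel[OF n, of a] nr_cancel[OF n, of b] by simp
  then show "a mod n = b mod n" by (rule mc_lcancel)
next
  assume "a mod n = b mod n" then show "rot_occ n (n - a mod n) = rot_occ n (n - b mod n)" by simp
qed

lemma rotate_inv: "L = rotate r M \<Longrightarrow> M = rotate (length M - r mod length M) L"
proof (cases "M = []")
  case True assume "L = rotate r M" then show ?thesis using True by simp
next
  case False
  assume L: "L = rotate r M"
  have "rotate (length M - r mod length M) L = rotate (length M - r mod length M + r) M" using L by (simp add: rotate_rotate)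
  also have "\<dots> = rotate ((length M - r mod length M + r) mod length M) M" by (rule rotate_conv_mod)
  also have "\<dots> = M" using nr_cancel[of "length M" r] False by simp
  finally show ?thesis by simp
qed

lemma rotate_mult: "rotate q L = L \<Longrightarrow> rotate (q * m) L = L"
proof (induction m)
  case (Suc m)
  have "rotate (q * Suc m) L = rotate q (rotate (q * m) L)" by (simp add: rotate_rotate add.commute)
  then show ?case using Suc by simp
qed simp

lemma rotate_fix_mod: "rotate p L = L \<Longrightarrow> rotate q L = L \<Longrightarrow> rotate (p mod q) L = L"
proof -
  assume p: "rotate p L = L" and q: "rotate q L = L"
  have "rotate (p mod q) L = rotate (p mod q) (rotate (q * (p div q)) L)" using rotate_mult[OF q] by simp
  also have "\<dots> = rotate (p mod q + q * (p div q)) L" by (simp add: rotate_rotate)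
  also have "\<dots> = L" using p by simp
  finally show ?thesis .
qed

lemma list_rots_nil: "list_rots [] [] = {\<lambda>i. i}"
  by (auto simp: list_rots_def rot_occ_def)

lemma list_rots_char: "length L = n \<Longrightarrow> length L' = n \<Longrightarrow> 0 < n \<Longrightarrow>
   list_rots L L' = rot_occ n ` {j. j < n \<and> rotate j L' = L}"
proof -
  assume l: "length L = n" "length L' = n" and n: "0 < n"
  have cond: "(\<forall>i<n. L' ! (rot_occ n j i) = L ! i) \<longleftrightarrow> rotate j L' = L" for j
  proof -
    have "(\<forall>i<n. L' ! (rot_occ n j i) = L ! i) \<longleftrightarrow> (\<forall>i<n. rotate j L' ! i = L ! i)"
      using l by (simp add: rot_occ_def nth_rotate add.commute)
    also have "\<dots> \<longleftrightarrow> rotate j L' = L" using l by (auto simp: list_eq_iff_nth_eq)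
    finally show ?thesis .
  qed
  show ?thesis
  proof
    show "list_rots L L' \<subseteq> rot_occ n ` {j. j < n \<and> rotate j L' = L}"
    proof
      fix \<sigma> assume "\<sigma> \<in> list_rots L L'"
      then obtain j where j: "\<sigma> = rot_occ n j" "\<forall>i<n. L' ! (\<sigma> i) = L ! i" using l by (auto simp: list_rots_def)
      have "rotate j L' = L" using cond j by blast
      then have "rotate (j mod n) L' = L" using l rotate_conv_mod by metis
      moreover have "\<sigma> = rot_occ n (j mod n)" using j rot_occ_mod by metis
      ultimately show "\<sigma> \<in> rot_occ n ` {j. j < n \<and> rotate j L' = L}" using n by auto
    qed
  next
    show "rot_occ n ` {j. j < n \<and> rotate j L' = L} \<subseteq> list_rots L L'"
      using cond l by (auto simp: list_rots_def)
  qed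
qed

lemma rot_occ_inj: "0 < n \<Longrightarrow> inj_on (rot_occ n) {..<n}"
proof (rule inj_onI)
  fix x y assume n: "0 < n" and x: "x \<in> {..<n}" and y: "y \<in> {..<n}" and e: "rot_occ n x = rot_occ n y"
  have "rot_occ n x 0 = rot_occ n y 0" using e by simp
  then show "x = y" using n x y by (simp add: rot_occ_def)
qed

lemma card_list_rots: "length L = n \<Longrightarrow> length L' = n \<Longrightarrow> 0 < n \<Longrightarrow>
   card (list_rots L L') = card {j. j < n \<and> rotate j L' = L}"
proof -
  assume a: "length L = n" "length L' = n" "0 < n"
  have "inj_on (rot_occ n) {j. j < n \<and> rotate j L' = L}"
    using rot_occ_inj[OF a(3)] by (rule inj_on_subset) auto
  then show ?thesis using list_rots_char[OF a] by (simp add: card_image)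
qed




lemma period_card: "length L = n \<Longrightarrow> 0 < n \<Longrightarrow> card {j. j < n \<and> rotate j L = L} dvd n"
proof -
  assume l: "length L = n" and n: "0 < n"
  define d where "d = (LEAST p. 0 < p \<and> rotate p L = L)"
  have ex: "0 < n \<and> rotate n L = L" using l n by simp
  have d: "0 < d \<and> rotate d L = L" unfolding d_def by (rule LeastI[of _ n], rule ex)
  have dmin: "\<not> (0 < p \<and> rotate p L = L)" if "p < d" for p using that unfolding d_def by (rule not_less_Least)
  have fixdvd: "d dvd j" if "rotate j L = L" for j
  proof -
    have r: "rotate (j mod d) L = L" using rotate_fix_mod[OF that] d by simp
    have lt: "j mod d < d" using d by simp
    have "j mod d = 0" using dmin[OF lt] r by simp
    then show ?thesis by (simp add: mod_eq_0_iff_dvd)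
  qed
  have dn: "d dvd n" using fixdvd[of n] ex by simp
  then obtain b where b: "n = d * b" by blast
  have S: "{j. j < n \<and> rotate j L = L} = (\<lambda>m. d * m) ` {..<b}"
  proof
    show "{j. j < n \<and> rotate j L = L} \<subseteq> (\<lambda>m. d * m) ` {..<b}"
    proof
      fix j assume j: "j \<in> {j. j < n \<and> rotate j L = L}"
      then obtain a where a: "j = d * a" using fixdvd by blast
      have "d * a < d * b" using j a b by simp
      then have "a < b" by simp
      then show "j \<in> (\<lambda>m. d * m) ` {..<b}" using a by auto
    qed
  next
    show "(\<lambda>m. d * m) ` {..<b} \<subseteq> {j. j < n \<and> rotate j L = L}"
    proof
      fix j assume "j \<in> (\<lambda>m. d * m) ` {..<b}"
      then obtain m where m: "m < b" "j = d * m" by auto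
      have "d * m < d * b" using m d by simp
      then show "j \<in> {j. j < n \<and> rotate j L = L}" using m b rotate_mult[of d L m] d by simp
    qed
  qed
  have "inj_on (\<lambda>m. d * m) {..<b}" using d by (simp add: inj_on_def)
  then have "card {j. j < n \<and> rotate j L = L} = b" using S by (simp add: card_image)
  then show ?thesis using b by simp
qed

lemma card_inv: "length M = n \<Longrightarrow> 0 < n \<Longrightarrow>
  card {j. j < n \<and> rotate j (rotate b M) = rotate a M} = card {j. j < n \<and> rotate j M = M}"
proof -
  assume l: "length M = n" and n: "0 < n"
  define c where "c = n - a mod n"
  define \<phi> where "\<phi> j = (j + b + c) mod n" for j
  have ca: "(c + a) mod n = 0" unfolding c_def using nr_cancel[OF n, of a] .
  have key: "rotate j (rotate b M) = rotate a M \<longleftrightarrow> rotate (\<phi> j) M = M" for j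
  proof
    assume h: "rotate j (rotate b M) = rotate a M"
    have "rotate c (rotate j (rotate b M)) = rotate c (rotate a M)" using h by simp
    moreover have "rotate c (rotate j (rotate b M)) = rotate (\<phi> j) M"
    proof -
      have "rotate c (rotate j (rotate b M)) = rotate (c + (j + b)) M" by (simp add: rotate_rotate)
      also have "\<dots> = rotate ((c + (j + b)) mod n) M" using rotate_conv_mod[of "c + (j + b)" M] l by simp
      also have "\<dots> = rotate (\<phi> j) M" unfolding \<phi>_def by (simp add: add_ac)
      finally show ?thesis .
    qed
    moreover have "rotate c (rotate a M) = M"
    proof -
      have "rotate c (rotate a M) = rotate (c + a) M" by (simp add: rotate_rotate)
      also have "\<dots> = rotate ((c + a) mod n) M" using rotate_conv_mod[of "c + a" M] l by simp
      finally show ?thesis using ca by simp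
    qed
    ultimately show "rotate (\<phi> j) M = M" by simp
  next
    assume h: "rotate (\<phi> j) M = M"
    have "rotate a (rotate (\<phi> j) M) = rotate a M" using h by simp
    moreover have "(a + \<phi> j) mod n = (j + b) mod n"
    proof -
      have "(a + \<phi> j) mod n = (a + (j + b + c)) mod n" unfolding \<phi>_def by (simp add: mod_add_right_eq)
      also have "\<dots> = ((j + b) + (c + a)) mod n" by (simp add: algebra_simps)
      also have "\<dots> = ((j + b) + 0) mod n" using ca by (intro mod_add_cong) simp_all
      finally show ?thesis by simp
    qed
    then have "rotate a (rotate (\<phi> j) M) = rotate j (rotate b M)"
    proof -
      assume e: "(a + \<phi> j) mod n = (j + b) mod n"
      have "rotate a (rotate (\<phi> j) M) = rotate (a + \<phi> j) M" by (simp add: rotate_rotate)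
      also have "\<dots> = rotate ((a + \<phi> j) mod n) M" using rotate_conv_mod[of "a + \<phi> j" M] l by simp
      also have "\<dots> = rotate ((j + b) mod n) M" using e by simp
      also have "\<dots> = rotate (j + b) M" using rotate_conv_mod[of "j + b" M] l by simp
      also have "\<dots> = rotate j (rotate b M)" by (simp add: rotate_rotate)
      finally show ?thesis .
    qed
    ultimately show "rotate j (rotate b M) = rotate a M" by simp
  qed
  have inj: "inj_on \<phi> {..<n}"
  proof (rule inj_onI)
    fix x y assume x: "x \<in> {..<n}" and y: "y \<in> {..<n}" and e: "\<phi> x = \<phi> y"
    have "(x + (b + c)) mod n = (y + (b + c)) mod n" using e unfolding \<phi>_def by (simp add: add.assoc)
    then have "x mod n = y mod n" by (rule mc_rcancel)
    then show "x = y" using x y by simp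
  qed
  have sub: "\<phi> ` {..<n} \<subseteq> {..<n}" using n by (auto simp: \<phi>_def)
  have img: "\<phi> ` {..<n} = {..<n}"
    by (rule endo_inj_surj[OF _ sub inj]) simp
  let ?S1 = "{j. j < n \<and> rotate j (rotate b M) = rotate a M}" and ?S2 = "{j. j < n \<and> rotate j M = M}"
  have im1: "\<phi> ` ?S1 = ?S2"
  proof
    show "\<phi> ` ?S1 \<subseteq> ?S2"
    proof
      fix x assume "x \<in> \<phi> ` ?S1"
      then obtain j where j: "j < n" "rotate j (rotate b M) = rotate a M" "x = \<phi> j" by auto
      have "x < n" using j(3) n unfolding \<phi>_def by simp
      moreover have "rotate x M = M" using key[of j] j by simp
      ultimately show "x \<in> ?S2" by simp
    qed
  next
    show "?S2 \<subseteq> \<phi> ` ?S1"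
    proof
      fix x assume x: "x \<in> ?S2"
      then have "x \<in> \<phi> ` {..<n}" using img by auto
      then obtain j where j: "j < n" "x = \<phi> j" by auto
      have "rotate j (rotate b M) = rotate a M" using key[of j] j x by simp
      then show "x \<in> \<phi> ` ?S1" using j by blast
    qed
  qed
  have inj1: "inj_on \<phi> ?S1" using inj by (rule inj_on_subset) auto
  show ?thesis using card_image[OF inj1] im1 by simp
qed

context fixes s :: "'e \<Rightarrow> 'v" and t :: "'e \<Rightarrow> 'v" begin

lemma comp_inv: "sh_comp s t W V \<Longrightarrow> endo s t W \<Longrightarrow>
   endo s t V \<and> (\<exists>m. letters V = rotate m (letters W)) \<and> (letters W = [] \<longrightarrow> tgt1 s t V = tgt1 s t W)"
  unfolding sh_comp_def
proof (induction rule: rtranclp_induct)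
  case base then show ?case by (auto intro: exI[of _ 0])
next
  case (step Y Z)
  then obtain m where m: "letters Y = rotate m (letters W)" and eY: "endo s t Y"
     and tY: "letters W = [] \<longrightarrow> tgt1 s t Y = tgt1 s t W" by blast
  from step(2) show ?case
  proof
    assume "\<exists>f. sm_typ s t f Y Z"
    then obtain f where f: "swt s t f" "smdom s t f = Y" "smcod s t f = Z" by (auto simp: sm_typ_iff)
    have "endo s t Z" using swt_props[OF f(1)] f by simp
    moreover have "letters Z = rotate (rot_amt f + m) (letters W)"
      using swt_letters[OF f(1)] f m by (simp add: rotate_rotate)
    moreover have "letters W = [] \<longrightarrow> tgt1 s t Z = tgt1 s t W"
      using swt_nil_tgt[OF f(1)] f m tY by auto
    ultimately show ?thesis by blast
  next
    assume "\<exists>f. sm_typ s t f Z Y"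
    then obtain f where f: "swt s t f" "smdom s t f = Z" "smcod s t f = Y" by (auto simp: sm_typ_iff)
    have "endo s t Z" using swt_props[OF f(1)] f by simp
    moreover have lz: "letters Z = rotate (length (letters Z) - rot_amt f mod length (letters Z) + m) (letters W)"
      using rotate_inv[OF swt_letters[OF f(1)]] f m by (simp add: rotate_rotate)
    moreover have "letters W = [] \<longrightarrow> tgt1 s t Z = tgt1 s t W"
    proof
      assume w: "letters W = []"
      then have "letters Z = []" using lz by simp
      then show "tgt1 s t Z = tgt1 s t W" using swt_nil_tgt[OF f(1)] f tY w by simp
    qed
    ultimately show ?thesis by blast
  qed
qed

lemma Rpow_amt: "rot_amt (Rpow s t a L v) = (if L = [] then 0 else a)"
proof (induction a arbitrary: L v)
  case (Suc a) then show ?case by (cases L) (auto simp: R1_def)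
qed simp

end




context fixes s :: "'e \<Rightarrow> 'v" and t :: "'e \<Rightarrow> 'v" begin

lemma P_B2: "swt s t f \<Longrightarrow> occ_perm (length (letters (smdom s t f))) f \<in> list_rots (letters (smdom s t f)) (letters (smcod s t f))"
proof -
  assume f: "swt s t f"
  let ?L = "letters (smdom s t f)" and ?L' = "letters (smcod s t f)" and ?r = "rot_amt f"
  let ?n = "length ?L"
  have L': "?L' = rotate ?r ?L" using swt_letters[OF f] .
  show ?thesis
  proof (cases "?n = 0")
    case True
    then have "?L = []" "?L' = []" using L' by auto
    then show ?thesis using True by (simp add: list_rots_nil occ_perm_def rot_occ_def)
  next
    case False
    then have n: "0 < ?n" by simp
    define j where "j = (?n - ?r mod ?n) mod ?n"
    have j: "j < ?n" unfolding j_def using n by simp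
    have o: "occ_perm ?n f = rot_occ ?n j" unfolding occ_perm_def j_def using rot_occ_mod by metis
    have "rotate j ?L' = rotate (j + ?r) ?L" using L' by (simp add: rotate_rotate)
    also have "\<dots> = rotate ((j + ?r) mod ?n) ?L" using rotate_conv_mod[of "j + ?r" ?L] by simp
    also have "(j + ?r) mod ?n = (?n - ?r mod ?n + ?r) mod ?n" unfolding j_def by (simp add: mod_add_left_eq)
    also have "\<dots> = 0" using nr_cancel[OF n] .
    finally have rj: "rotate j ?L' = ?L" by simp
    have "list_rots ?L ?L' = rot_occ ?n ` {j. j < ?n \<and> rotate j ?L' = ?L}"
      by (rule list_rots_char) (use L' n in simp_all)
    then show ?thesis using o j rj by auto
  qed
qed

lemma P_B3: "swt s t f \<Longrightarrow> swt s t g \<Longrightarrow> smdom s t f = smdom s t g \<Longrightarrow> smcod s t f = smcod s t g \<Longrightarrow>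
   (eqS s t f g \<longleftrightarrow> occ_perm (length (letters (smdom s t f))) f = occ_perm (length (letters (smdom s t f))) g)"
proof -
  assume f: "swt s t f" and g: "swt s t g" and d: "smdom s t f = smdom s t g" and c: "smcod s t f = smcod s t g"
  let ?n = "length (letters (smdom s t f))"
  show ?thesis
  proof
    assume e: "eqS s t f g"
    have "rot_amt f mod ?n = rot_amt g mod ?n" using FW[OF e] .
    then show "occ_perm ?n f = occ_perm ?n g" by (simp add: occ_perm_def)
  next
    assume o: "occ_perm ?n f = occ_perm ?n g"
    have "letters (smdom s t f) = [] \<or> rot_amt f mod ?n = rot_amt g mod ?n"
    proof (cases "?n = 0")
      case True then show ?thesis by simp
    next
      case False
      then have "rot_amt f mod ?n = rot_amt g mod ?n" using o occ_eq_iff[of ?n "rot_amt f" "rot_amt g"] by (simp add: occ_perm_def)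
      then show ?thesis by simp
    qed
    then show "eqS s t f g" using FAITH[OF f g d c] by simp
  qed
qed

lemma nj_mod: "j < (n::nat) \<Longrightarrow> (n - (n - j) mod n) mod n = j"
proof (cases "j = 0")
  case True then show ?thesis by simp
next
  case False
  assume j: "j < n"
  then have "(n - j) mod n = n - j" using False by simp
  then show ?thesis using j by simp
qed

lemma P_B4: "endo s t V \<Longrightarrow> endo s t V' \<Longrightarrow> (letters V = [] \<longrightarrow> tgt1 s t V = tgt1 s t V') \<Longrightarrow>
   length (letters V') = length (letters V) \<Longrightarrow> \<sigma> \<in> list_rots (letters V) (letters V') \<Longrightarrow>
   \<exists>f. sm_typ s t f V V' \<and> occ_perm (length (letters V)) f = \<sigma>"
proof -
  assume eV: "endo s t V" and eV': "endo s t V'" and tt: "letters V = [] \<longrightarrow> tgt1 s t V = tgt1 s t V'"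
    and ll: "length (letters V') = length (letters V)" and \<sigma>: "\<sigma> \<in> list_rots (letters V) (letters V')"
  let ?L = "letters V" and ?L' = "letters V'" and ?v = "tgt1 s t V"
  let ?n = "length ?L"
  have eN: "endo s t (nfl ?L ?v)" using nfl_can_endo[OF eV] .
  have eN': "endo s t (nfl ?L' (tgt1 s t V'))" using nfl_can_endo[OF eV'] .
  have cV: "swt s t (SSh (can s t V))" "smdom s t (SSh (can s t V)) = V" "smcod s t (SSh (can s t V)) = nfl ?L ?v"
    using eV by (auto simp: endo_def)
  have cV': "swt s t (SSh (inv2 (can s t V')))" "smdom s t (SSh (inv2 (can s t V'))) = nfl ?L' (tgt1 s t V')"
    "smcod s t (SSh (inv2 (can s t V'))) = V'"
    using eV' eN' by (auto simp: endo_def)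
  show ?thesis
  proof (cases "?n = 0")
    case True
    then have nil: "?L = []" "?L' = []" using ll by auto
    define f where "f = SComp (SComp (SSh (can s t V)) (Rpow s t 0 ?L ?v)) (SSh (inv2 (can s t V')))"
    have "sm_typ s t f V V'" unfolding sm_typ_iff f_def using cV cV' eN nil tt by simp
    moreover have "occ_perm ?n f = \<sigma>" using \<sigma> nil True by (simp add: list_rots_nil occ_perm_def rot_occ_def)
    ultimately show ?thesis by blast
  next
    case False
    then have n: "0 < ?n" by simp
    have "list_rots ?L ?L' = rot_occ ?n ` {j. j < ?n \<and> rotate j ?L' = ?L}"
      by (rule list_rots_char) (use ll n in simp_all)
    then obtain j where j: "j < ?n" "rotate j ?L' = ?L" "\<sigma> = rot_occ ?n j" using \<sigma> by auto
    define r where "r = ?n - j"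
    have rot: "rotate r ?L = ?L'"
    proof -
      have "rotate r (rotate j ?L') = rotate (r + j) ?L'" by (rule rotate_rotate)
      then have "rotate r ?L = rotate (r + j) ?L'" using j(2) by simp
      also have "r + j = length ?L'" unfolding r_def using j ll by simp
      finally show ?thesis by simp
    qed
    have ne: "?L' \<noteq> []" "?L \<noteq> []" using n ll by auto
    have tv: "nv t ?L' ?v = tgt1 s t V'" using wf_last[of s t V'] eV' ne by (simp add: nv_def endo_def)
    define f where "f = SComp (SComp (SSh (can s t V)) (Rpow s t r ?L ?v)) (SSh (inv2 (can s t V')))"
    have "sm_typ s t f V V'" unfolding sm_typ_iff f_def using cV cV' eN rot tv by simp
    moreover have "occ_perm ?n f = \<sigma>"
    proof -
      have "rot_amt f = r" unfolding f_def using ne by (simp add: Rpow_amt)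
      then have "occ_perm ?n f = rot_occ ?n (?n - r mod ?n)" by (simp add: occ_perm_def)
      also have "\<dots> = rot_occ ?n ((?n - r mod ?n) mod ?n)" by (rule rot_occ_mod)
      also have "(?n - r mod ?n) mod ?n = j" unfolding r_def using nj_mod[OF j(1)] .
      finally show ?thesis using j by simp
    qed
    ultimately show ?thesis by blast
  qed
qed

end




theorem mainTheorem5:
  fixes s t :: "'e \<Rightarrow> 'v" and W :: "('v, 'e) cell"
  assumes "endo s t W"
  defines "n \<equiv> length (letters W)"
      and "k \<equiv> card (list_rots (letters W) (letters W))"
  shows "k dvd n
    \<and> (\<forall>V V'. sh_comp s t W V \<and> sh_comp s t W V' \<longrightarrow>
          card (list_rots (letters V) (letters V')) = k
        \<and> (\<forall>f. sm_typ s t f V V' \<longrightarrow> occ_perm n f \<in> list_rots (letters V) (letters V'))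
        \<and> (\<forall>f g. sm_typ s t f V V' \<and> sm_typ s t g V V' \<longrightarrow>
                   (eqS s t f g \<longleftrightarrow> occ_perm n f = occ_perm n g))
        \<and> (\<forall>\<sigma>\<in>list_rots (letters V) (letters V'). \<exists>f. sm_typ s t f V V' \<and> occ_perm n f = \<sigma>))
    \<and> (\<forall>V V' V'' f g. sh_comp s t W V \<and> sm_typ s t f V V' \<and> sm_typ s t g V' V'' \<longrightarrow>
          occ_perm n (SComp f g) = occ_perm n g \<circ> occ_perm n f)
    \<and> (aperiodic (letters W) \<longrightarrow>
          (\<forall>V V' f g. sh_comp s t W V \<and> sm_typ s t f V V' \<and> sm_typ s t g V V' \<longrightarrow> eqS s t f g))"
proof -
  let ?LW = "letters W"
  have lenLW: "length ?LW = n" unfolding n_def ..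
  have ci: "endo s t V \<and> (\<exists>m. letters V = rotate m ?LW) \<and> (?LW = [] \<longrightarrow> tgt1 s t V = tgt1 s t W)"
    if "sh_comp s t W V" for V using comp_inv[OF that assms(1)] .
  have lenV: "length (letters V) = n" if V: "sh_comp s t W V" for V
  proof -
    obtain m where "letters V = rotate m ?LW" using ci[OF V] by blast
    then show ?thesis using lenLW by simp
  qed
  have k1: "k = 1" if "n = 0"
  proof -
    have "?LW = []" using that lenLW by simp
    then show ?thesis unfolding k_def by (simp add: list_rots_nil)
  qed
  have kp: "k = card {j. j < n \<and> rotate j ?LW = ?LW}" if "0 < n"
    unfolding k_def using card_list_rots[OF lenLW lenLW that] .
  have A: "k dvd n"
  proof (cases "n = 0")
    case True then show ?thesis using k1 by simp
  next
    case False then show ?thesis using kp period_card[OF lenLW] by simp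
  qed
  have B1: "card (list_rots (letters V) (letters V')) = k" if V: "sh_comp s t W V" and V': "sh_comp s t W V'" for V V'
  proof -
    obtain a where a: "letters V = rotate a ?LW" using ci[OF V] by blast
    obtain b where b: "letters V' = rotate b ?LW" using ci[OF V'] by blast
    show ?thesis
    proof (cases "n = 0")
      case True
      then have "letters V = []" "letters V' = []" using lenV[OF V] lenV[OF V'] by auto
      then show ?thesis using k1[OF True] by (simp add: list_rots_nil)
    next
      case False
      then have n: "0 < n" by simp
      have "card (list_rots (letters V) (letters V')) = card {j. j < n \<and> rotate j (letters V') = letters V}"
        using card_list_rots[OF lenV[OF V] lenV[OF V'] n] .
      also have "\<dots> = card {j. j < n \<and> rotate j (rotate b ?LW) = rotate a ?LW}" using a b by simp
      also have "\<dots> = card {j. j < n \<and> rotate j ?LW = ?LW}" using card_inv[OF lenLW n] .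
      also have "\<dots> = k" using kp[OF n] by simp
      finally show ?thesis .
    qed
  qed
  have B2: "occ_perm n f \<in> list_rots (letters V) (letters V')" if V: "sh_comp s t W V" and f: "sm_typ s t f V V'" for V V' f
  proof -
    have f': "swt s t f" "smdom s t f = V" "smcod s t f = V'" using f by (auto simp: sm_typ_iff)
    show ?thesis using P_B2[OF f'(1)] f' lenV[OF V] by simp
  qed
  have B3: "eqS s t f g \<longleftrightarrow> occ_perm n f = occ_perm n g"
    if V: "sh_comp s t W V" and f: "sm_typ s t f V V'" and g: "sm_typ s t g V V'" for V V' f g
  proof -
    have f': "swt s t f" "smdom s t f = V" "smcod s t f = V'" using f by (auto simp: sm_typ_iff)
    have g': "swt s t g" "smdom s t g = V" "smcod s t g = V'" using g by (auto simp: sm_typ_iff)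
    show ?thesis using P_B3[OF f'(1) g'(1)] f' g' lenV[OF V] by simp
  qed
  have B4: "\<exists>f. sm_typ s t f V V' \<and> occ_perm n f = \<sigma>"
    if V: "sh_comp s t W V" and V': "sh_comp s t W V'" and \<sigma>: "\<sigma> \<in> list_rots (letters V) (letters V')" for V V' \<sigma>
  proof -
    have tt: "letters V = [] \<longrightarrow> tgt1 s t V = tgt1 s t V'"
    proof
      assume "letters V = []"
      then have "?LW = []" using lenV[OF V] lenLW by simp
      then show "tgt1 s t V = tgt1 s t V'" using ci[OF V] ci[OF V'] by simp
    qed
    have ll: "length (letters V') = length (letters V)" using lenV[OF V] lenV[OF V'] by simp
    show ?thesis using P_B4[OF _ _ tt ll \<sigma>] ci[OF V] ci[OF V'] lenV[OF V] by simp
  qed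
  have C: "occ_perm n (SComp f g) = occ_perm n g \<circ> occ_perm n f" for f g
    unfolding occ_perm_def rot_amt.simps by (rule occ_comp)
  have D: "eqS s t f g" if ap: "aperiodic ?LW" and V: "sh_comp s t W V" and f: "sm_typ s t f V V'"
    and g: "sm_typ s t g V V'" for V V' f g
  proof -
    have st: "(\<lambda>X Y. (\<exists>f. sm_typ s t f X Y) \<or> (\<exists>f. sm_typ s t f Y X)) V V'" using f by blast
    have V': "sh_comp s t W V'"
      using rtranclp.rtrancl_into_rtrancl[OF V[unfolded sh_comp_def] st] unfolding sh_comp_def .
    have kk: "k = 1"
    proof (cases "n = 0")
      case True then show ?thesis using k1 by simp
    next
      case False
      then have n: "0 < n" by simp
      have "{j. j < n \<and> rotate j ?LW = ?LW} = {0}"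
        using ap lenLW n unfolding aperiodic_def by auto
      then show ?thesis using kp[OF n] by simp
    qed
    have c1: "card (list_rots (letters V) (letters V')) = 1" using B1[OF V V'] kk by simp
    have "occ_perm n f = occ_perm n g"
      using B2[OF V f] B2[OF V g] c1 by (metis card_1_singletonE singletonD)
    then show ?thesis using B3[OF V f g] by simp
  qed
  have P1: "\<forall>V V'. sh_comp s t W V \<and> sh_comp s t W V' \<longrightarrow>
          card (list_rots (letters V) (letters V')) = k
        \<and> (\<forall>f. sm_typ s t f V V' \<longrightarrow> occ_perm n f \<in> list_rots (letters V) (letters V'))
        \<and> (\<forall>f g. sm_typ s t f V V' \<and> sm_typ s t g V V' \<longrightarrow>
                   (eqS s t f g \<longleftrightarrow> occ_perm n f = occ_perm n g))
        \<and> (\<forall>\<sigma>\<in>list_rots (letters V) (letters V'). \<exists>f. sm_typ s t f V V' \<and> occ_perm n f = \<sigma>)"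
  proof (intro allI impI)
    fix V V' assume VV: "sh_comp s t W V \<and> sh_comp s t W V'"
    then have V: "sh_comp s t W V" and V': "sh_comp s t W V'" by simp_all
    have 1: "card (list_rots (letters V) (letters V')) = k" by (rule B1[OF V V'])
    have 2: "\<forall>f. sm_typ s t f V V' \<longrightarrow> occ_perm n f \<in> list_rots (letters V) (letters V')"
      using B2[OF V] by blast
    have 3: "\<forall>f g. sm_typ s t f V V' \<and> sm_typ s t g V V' \<longrightarrow> (eqS s t f g \<longleftrightarrow> occ_perm n f = occ_perm n g)"
      using B3[OF V] by blast
    have 4: "\<forall>\<sigma>\<in>list_rots (letters V) (letters V'). \<exists>f. sm_typ s t f V V' \<and> occ_perm n f = \<sigma>"
      using B4[OF V V'] by blast
    show "card (list_rots (letters V) (letters V')) = k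
        \<and> (\<forall>f. sm_typ s t f V V' \<longrightarrow> occ_perm n f \<in> list_rots (letters V) (letters V'))
        \<and> (\<forall>f g. sm_typ s t f V V' \<and> sm_typ s t g V V' \<longrightarrow>
                   (eqS s t f g \<longleftrightarrow> occ_perm n f = occ_perm n g))
        \<and> (\<forall>\<sigma>\<in>list_rots (letters V) (letters V'). \<exists>f. sm_typ s t f V V' \<and> occ_perm n f = \<sigma>)"
      by (rule conjI[OF 1 conjI[OF 2 conjI[OF 3 4]]])
  qed
  have P2: "\<forall>V V' V'' f g. sh_comp s t W V \<and> sm_typ s t f V V' \<and> sm_typ s t g V' V'' \<longrightarrow>
          occ_perm n (SComp f g) = occ_perm n g \<circ> occ_perm n f" using C by blast
  have P3: "aperiodic (letters W) \<longrightarrow>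
          (\<forall>V V' f g. sh_comp s t W V \<and> sm_typ s t f V V' \<and> sm_typ s t g V V' \<longrightarrow> eqS s t f g)"
    using D by blast
  show ?thesis by (rule conjI[OF A conjI[OF P1 conjI[OF P2 P3]]])
qed


end
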